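(* Let $d\ge5$ and $\alpha\in(0,\frac12)$ with $d\alpha\in\mathbb{Z}$. Assume (induction hypothesis) that the intersection of the subgroup generated by the $L_q$, $q\in\mathcal A_{d-1}$, with $SL(\mathbb{C}^{\mathcal A_{d-1}})$ is dense for the usual topology (or Zariski dense) in $SU^*(Q'_\alpha)$. Let $p\in\mathcal A_d$, let $w_p$ be a nonzero vector spanning the $Q_\alpha$-orthogonal of the hyperplane $H_p=\mathrm{span}\{e_q:q\ne p\}$ of $\mathbb{C}^{\mathcal A_d}$, and let $\mathrm{Stab}(w_p)$ be the stabilizer of $w_p$ in $SU(Q_\alpha)$. Then the intersection with $SU(Q_\alpha)$ of the subgroup generated by the $L_q$, $q\in\mathcal A_d$, $q\ne p$, is Zariski dense in $\mathrm{Stab}(w_p)$.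
   Context: For $n\ge2$ let $\mathcal A_n=\{1-n,3-n,\dots,n-1\}$ (ordered as integers) and $(e_q)$ the canonical basis of $\mathbb{C}^{\mathcal A_n}$; $\rho=e^{2\pi i\alpha}$, $\zeta=\rho^{-1}$. For $p\in\mathcal A_n$, $L_p$ is the linear operator on $\mathbb{C}^{\mathcal A_n}$ with $L_p(e_q)=e_q-e_p$ if $q>p$, $L_p(e_q)=e_q-\zeta e_p$ if $q<p$, $L_p(e_p)=-\zeta e_p$. $Q_\alpha$ on $\mathbb{C}^{\mathcal A_d}$ is the hermitian form (linear in the first argument, conjugate-linear in the second) with $Q_\alpha(e_p,e_p)=1$, $Q_\alpha(e_p,e_{p'})=(1+\zeta)^{-1}=\frac12(1+i\tan\pi\alpha)$ for $p>p'$; it is non-degenerate under the hypothesis. $Q'_\alpha$ is the form defined by the same formulas on $\mathbb{C}^{\mathcal A_{d-1}}$; since $d\alpha\in\mathbb{Z}$ its kernel is a line spanned by a vector $e'$, and $SU^*(Q'_\alpha)$ is the group of determinant-one linear automorphisms of $\mathbb{C}^{\mathcal A_{d-1}}$ preserving $Q'_\alpha$ and fixing $e'$. $SU(Q_\alpha)$ is the group of determinant-one automorphisms preserving $Q_\alpha$. *)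

theory Defs
  imports Complex_Main "Jordan_Normal_Form.Determinant"
begin

text \<open>Index convention: the basis vector e_q, q in A_n = {1-n,3-n,...,n-1}, is represented
  by the index i < n with q = 2i+1-n.  This is an order-preserving bijection
  {0..<n} -> A_n, and all definitions below only use the order of the indices.
  Vectors of C^{A_n} are complex vec of dimension n, operators are complex n x n matrices
  (column j = image of e_j).\<close>

definition zeta :: "real \<Rightarrow> complex" where
  "zeta \<alpha> = cis (- 2 * pi * \<alpha>)"

definition Lop :: "nat \<Rightarrow> real \<Rightarrow> nat \<Rightarrow> complex mat" where
  "Lop n \<alpha> p = mat n n (\<lambda>(i, j).
      if j = p then (if i = p then - zeta \<alpha> else 0)
      else (if i = j then 1 else 0) - (if i = p then (if j > p then 1 else zeta \<alpha>) else 0))"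

definition Qgram :: "real \<Rightarrow> nat \<Rightarrow> nat \<Rightarrow> complex" where
  "Qgram \<alpha> i j = (if i = j then 1 else if i > j then inverse (1 + zeta \<alpha>)
                   else cnj (inverse (1 + zeta \<alpha>)))"

definition Qform :: "nat \<Rightarrow> real \<Rightarrow> complex vec \<Rightarrow> complex vec \<Rightarrow> complex" where
  "Qform n \<alpha> x y = (\<Sum>i<n. \<Sum>j<n. x $ i * cnj (y $ j) * Qgram \<alpha> i j)"

definition preserves_form :: "nat \<Rightarrow> real \<Rightarrow> complex mat \<Rightarrow> bool" where
  "preserves_form n \<alpha> g \<longleftrightarrow>
     (\<forall>x \<in> carrier_vec n. \<forall>y \<in> carrier_vec n. Qform n \<alpha> (g *\<^sub>v x) (g *\<^sub>v y) = Qform n \<alpha> x y)"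

definition SU_Q :: "nat \<Rightarrow> real \<Rightarrow> complex mat set" where
  "SU_Q n \<alpha> = {g \<in> carrier_mat n n. det g = 1 \<and> preserves_form n \<alpha> g}"

definition form_kernel :: "nat \<Rightarrow> real \<Rightarrow> complex vec set" where
  "form_kernel n \<alpha> = {v \<in> carrier_vec n. \<forall>y \<in> carrier_vec n. Qform n \<alpha> v y = 0}"

text \<open>SU^*(Q): elements of SU(Q) fixing the kernel (a line spanned by e'), i.e. fixing e'.\<close>
definition SU_star :: "nat \<Rightarrow> real \<Rightarrow> complex mat set" where
  "SU_star n \<alpha> = {g \<in> SU_Q n \<alpha>. \<forall>v \<in> form_kernel n \<alpha>. g *\<^sub>v v = v}"

definition SL_mat :: "nat \<Rightarrow> complex mat set" where
  "SL_mat n = {g \<in> carrier_mat n n. det g = 1}"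

inductive_set gen_group :: "nat \<Rightarrow> complex mat set \<Rightarrow> complex mat set"
  for n :: nat and S :: "complex mat set" where
  gen_one: "1\<^sub>m n \<in> gen_group n S"
| gen_gen: "s \<in> S \<Longrightarrow> s \<in> gen_group n S"
| gen_mult: "g \<in> gen_group n S \<Longrightarrow> h \<in> gen_group n S \<Longrightarrow> g * h \<in> gen_group n S"
| gen_inv: "g \<in> gen_group n S \<Longrightarrow> h \<in> carrier_mat n n \<Longrightarrow> g * h = 1\<^sub>m n \<Longrightarrow> h * g = 1\<^sub>m n
            \<Longrightarrow> h \<in> gen_group n S"

text \<open>Real polynomial functions on M_n(C) = R^{2n^2}: polynomials in the real and imaginary
  parts of the matrix entries (the real Zariski topology, SU(Q) being a real algebraic group).\<close>
inductive_set real_poly_fun :: "nat \<Rightarrow> (complex mat \<Rightarrow> real) set" for n :: nat where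
  rp_const: "(\<lambda>A. c) \<in> real_poly_fun n"
| rp_re: "i < n \<Longrightarrow> j < n \<Longrightarrow> (\<lambda>A. Re (A $$ (i, j))) \<in> real_poly_fun n"
| rp_im: "i < n \<Longrightarrow> j < n \<Longrightarrow> (\<lambda>A. Im (A $$ (i, j))) \<in> real_poly_fun n"
| rp_add: "f \<in> real_poly_fun n \<Longrightarrow> g \<in> real_poly_fun n \<Longrightarrow> (\<lambda>A. f A + g A) \<in> real_poly_fun n"
| rp_mult: "f \<in> real_poly_fun n \<Longrightarrow> g \<in> real_poly_fun n \<Longrightarrow> (\<lambda>A. f A * g A) \<in> real_poly_fun n"

definition zariski_dense_in :: "nat \<Rightarrow> complex mat set \<Rightarrow> complex mat set \<Rightarrow> bool" where
  "zariski_dense_in n S G \<longleftrightarrow> S \<subseteq> G \<and>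
     (\<forall>f \<in> real_poly_fun n. (\<forall>A \<in> S. f A = 0) \<longrightarrow> (\<forall>A \<in> G. f A = 0))"

definition usual_dense_in :: "nat \<Rightarrow> complex mat set \<Rightarrow> complex mat set \<Rightarrow> bool" where
  "usual_dense_in n S G \<longleftrightarrow> S \<subseteq> G \<and>
     (\<forall>A \<in> G. \<forall>\<epsilon> > 0. \<exists>B \<in> S. \<forall>i < n. \<forall>j < n. cmod (A $$ (i, j) - B $$ (i, j)) < \<epsilon>)"

end

theory Submission
  imports Defs "HOL-Computational_Algebra.Fundamental_Theorem_Algebra"
begin


section \<open>Real polynomial functions\<close>

definition cpoly :: "nat \<Rightarrow> (complex mat \<Rightarrow> complex) \<Rightarrow> bool" where
  "cpoly n \<phi> \<longleftrightarrow> (\<lambda>A. Re (\<phi> A)) \<in> real_poly_fun n \<and> (\<lambda>A. Im (\<phi> A)) \<in> real_poly_fun n"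

lemma rp_cmult: "f \<in> real_poly_fun n \<Longrightarrow> (\<lambda>A. c * f A) \<in> real_poly_fun n"
  using rp_mult[OF rp_const[of c n]] by simp

lemma rp_diff: "f \<in> real_poly_fun n \<Longrightarrow> g \<in> real_poly_fun n \<Longrightarrow> (\<lambda>A. f A - g A) \<in> real_poly_fun n"
  using rp_add[OF _ rp_cmult[of g n "-1"], of f] by simp

lemma cpoly_const[intro]: "cpoly n (\<lambda>A. c)"
  unfolding cpoly_def by (auto intro: rp_const)

lemma cpoly_entry[intro]: "i < n \<Longrightarrow> j < n \<Longrightarrow> cpoly n (\<lambda>A. A $$ (i,j))"
  unfolding cpoly_def by (auto intro: rp_re rp_im)

lemma cpoly_add[intro]: "cpoly n f \<Longrightarrow> cpoly n g \<Longrightarrow> cpoly n (\<lambda>A. f A + g A)"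
  unfolding cpoly_def by (auto intro: rp_add)

lemma cpoly_mult[intro]: "cpoly n f \<Longrightarrow> cpoly n g \<Longrightarrow> cpoly n (\<lambda>A. f A * g A)"
  unfolding cpoly_def by (auto intro!: rp_add rp_diff rp_mult)

lemma cpoly_cmult[intro]: "cpoly n f \<Longrightarrow> cpoly n (\<lambda>A. c * f A)"
  using cpoly_mult[OF cpoly_const[of n c]] by simp

lemma cpoly_neg[intro]: "cpoly n f \<Longrightarrow> cpoly n (\<lambda>A. - f A)"
  using cpoly_cmult[of n f "-1"] by simp

lemma cpoly_diff[intro]: "cpoly n f \<Longrightarrow> cpoly n g \<Longrightarrow> cpoly n (\<lambda>A. f A - g A)"
  using cpoly_add[OF _ cpoly_neg[of n g], of f] by simp

lemma cpoly_cnj[intro]: "cpoly n f \<Longrightarrow> cpoly n (\<lambda>A. cnj (f A))"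
  unfolding cpoly_def using rp_cmult[of "\<lambda>A. Im (f A)" n "-1"] by auto

lemma cpoly_sum[intro]: "finite K \<Longrightarrow> (\<And>k. k \<in> K \<Longrightarrow> cpoly n (f k)) \<Longrightarrow> cpoly n (\<lambda>A. \<Sum>k\<in>K. f k A)"
  by (induction K rule: finite_induct) auto

lemma cpoly_prod[intro]: "finite K \<Longrightarrow> (\<And>k. k \<in> K \<Longrightarrow> cpoly n (f k)) \<Longrightarrow> cpoly n (\<lambda>A. \<Prod>k\<in>K. f k A)"
  by (induction K rule: finite_induct) auto

lemma cpoly_if[intro]: "cpoly n f \<Longrightarrow> cpoly n g \<Longrightarrow> cpoly n (\<lambda>A. if b then f A else g A)"
  by (cases b) auto

lemma rp_comp:
  assumes "f \<in> real_poly_fun k"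
    and "\<And>i j. i < k \<Longrightarrow> j < k \<Longrightarrow> cpoly n (\<lambda>A. \<Phi> A $$ (i,j))"
  shows "(\<lambda>A. f (\<Phi> A)) \<in> real_poly_fun n"
  using assms
proof (induction f rule: real_poly_fun.induct)
  case (rp_const c) show ?case by (metis real_poly_fun.rp_const)
next
  case (rp_re i j) then show ?case unfolding cpoly_def by auto
next
  case (rp_im i j) then show ?case unfolding cpoly_def by auto
next
  case (rp_add f g) then show ?case by (auto intro: real_poly_fun.rp_add)
next
  case (rp_mult f g) then show ?case by (auto intro: real_poly_fun.rp_mult)
qed

lemma cpoly_comp:
  assumes "cpoly k f"
    and "\<And>i j. i < k \<Longrightarrow> j < k \<Longrightarrow> cpoly n (\<lambda>A. \<Phi> A $$ (i,j))"
  shows "cpoly n (\<lambda>A. f (\<Phi> A))"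
  using assms(1) rp_comp[OF _ assms(2)] unfolding cpoly_def by auto

lemma cpoly_det:
  assumes "\<And>A. M A \<in> carrier_mat k k"
    and "\<And>i j. i < k \<Longrightarrow> j < k \<Longrightarrow> cpoly n (\<lambda>A. M A $$ (i,j))"
  shows "cpoly n (\<lambda>A. det (M A))"
proof -
  have "(\<lambda>A. det (M A)) = (\<lambda>A. \<Sum> p \<in> {p. p permutes {0 ..< k}}.
     signof p * (\<Prod> i = 0 ..< k. M A $$ (i, p i)))"
    using det_def'[OF assms(1)] by auto
  moreover have "cpoly n (\<lambda>A. \<Sum> p \<in> {p. p permutes {0 ..< k}}.
     signof p * (\<Prod> i = 0 ..< k. M A $$ (i, p i)))"
  proof (intro cpoly_sum cpoly_cmult cpoly_prod)
    show "finite {p. p permutes {0..<k}}" by (simp add: finite_permutations)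
    fix p i assume "p \<in> {p. p permutes {0..<k}}" "i \<in> {0..<k}"
    then have "p i < k" "i < k" using permutes_in_image by fastforce+
    then show "cpoly n (\<lambda>A. M A $$ (i, p i))" using assms(2) by auto
  qed auto
  ultimately show ?thesis by simp
qed

lemma cpoly_adj:
  assumes "\<And>A. M A \<in> carrier_mat k k"
    and "\<And>i j. i < k \<Longrightarrow> j < k \<Longrightarrow> cpoly n (\<lambda>A. M A $$ (i,j))"
    and "i < k" "j < k"
  shows "cpoly n (\<lambda>A. adj_mat (M A) $$ (i,j))"
proof -
  have "(\<lambda>A. adj_mat (M A) $$ (i,j)) = (\<lambda>A. (-1)^(j+i) * det (mat_delete (M A) j i))"
    using assms(1)[THEN carrier_matD(1)] assms(1)[THEN carrier_matD(2)] assms(3,4)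
    unfolding adj_mat_def cofactor_def by auto
  moreover have "cpoly n (\<lambda>A. det (mat_delete (M A) j i))"
  proof (rule cpoly_det[where k = "k - 1"])
    show "\<And>A. mat_delete (M A) j i \<in> carrier_mat (k - 1) (k - 1)"
      using mat_delete_carrier assms(1) by blast
    fix i' j' assume "i' < k - 1" "j' < k - 1"
    then have "(\<lambda>A. mat_delete (M A) j i $$ (i', j')) =
       (\<lambda>A. M A $$ (if i' < j then i' else Suc i', if j' < i then j' else Suc j'))"
      using assms(1)[THEN carrier_matD(1)] assms(1)[THEN carrier_matD(2)]
      unfolding mat_delete_def by auto
    then show "cpoly n (\<lambda>A. mat_delete (M A) j i $$ (i', j'))"
      using assms(2) \<open>i' < k - 1\<close> \<open>j' < k - 1\<close> by auto
  qed
  ultimately show ?thesis by auto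
qed

section \<open>Continuity\<close>

lemma rp_seq:
  assumes "f \<in> real_poly_fun n"
    and "\<And>i j. i < n \<Longrightarrow> j < n \<Longrightarrow> (\<lambda>m. B m $$ (i,j)) \<longlonglongrightarrow> A $$ (i,j)"
  shows "(\<lambda>m. f (B m)) \<longlonglongrightarrow> f A"
  using assms
proof (induction f rule: real_poly_fun.induct)
  case (rp_const c) then show ?case by simp
next
  case (rp_re i j) then show ?case by (auto intro: tendsto_Re)
next
  case (rp_im i j) then show ?case by (auto intro: tendsto_Im)
next
  case (rp_add f g) then show ?case by (auto intro: tendsto_add)
next
  case (rp_mult f g) then show ?case by (auto intro: tendsto_mult)
qed

lemma usual_imp_zariski:
  assumes "usual_dense_in n S G"
  shows "zariski_dense_in n S G"
  unfolding zariski_dense_in_def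
proof (intro conjI ballI impI)
  show "S \<subseteq> G" using assms unfolding usual_dense_in_def by auto
  fix f A assume f: "f \<in> real_poly_fun n" and van: "\<forall>A\<in>S. f A = 0" and A: "A \<in> G"
  have "\<forall>m. \<exists>B\<in>S. \<forall>i<n. \<forall>j<n. cmod (A $$ (i, j) - B $$ (i, j)) < inverse (real (Suc m))"
    using assms A unfolding usual_dense_in_def by auto
  then obtain B where B: "\<And>m. B m \<in> S"
    "\<And>m i j. i < n \<Longrightarrow> j < n \<Longrightarrow> cmod (A $$ (i, j) - B m $$ (i, j)) < inverse (real (Suc m))"
    by metis
  have conv: "(\<lambda>m. B m $$ (i,j)) \<longlonglongrightarrow> A $$ (i,j)" if "i < n" "j < n" for i j
  proof -
    show ?thesis
    proof (rule LIMSEQ_I)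
      fix r :: real assume "0 < r"
      then obtain n0 where n0: "inverse (real (Suc n0)) < r" using reals_Archimedean by blast
      have "norm (B m $$ (i, j) - A $$ (i, j)) < r" if "m \<ge> n0" for m
      proof -
        have "norm (B m $$ (i, j) - A $$ (i, j)) < inverse (real (Suc m))"
          using B(2)[OF \<open>i < n\<close> \<open>j < n\<close>, of m] by (simp add: norm_minus_commute)
        also have "\<dots> \<le> inverse (real (Suc n0))" using that by (simp add: le_imp_inverse_le)
        finally show ?thesis using n0 by simp
      qed
      then show "\<exists>no. \<forall>m\<ge>no. norm (B m $$ (i, j) - A $$ (i, j)) < r" by blast
    qed
  qed
  have l1: "(\<lambda>m. f (B m)) \<longlonglongrightarrow> f A" by (rule rp_seq[OF f conv])
  have "f (B m) = 0" for m using van B(1) by blast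
  then have l2: "(\<lambda>m. f (B m)) \<longlonglongrightarrow> 0" by simp
  show "f A = 0" using LIMSEQ_unique[OF l1 l2] .
qed

section \<open>Determinant of a polynomial family\<close>

definition pfun :: "(complex \<Rightarrow> complex) \<Rightarrow> bool" where
  "pfun f \<longleftrightarrow> (\<exists>P. \<forall>s. f s = poly P s)"

lemma pfun_const[intro]: "pfun (\<lambda>s. c)"
  unfolding pfun_def by (rule exI[of _ "[:c:]"]) simp

lemma pfun_id[intro]: "pfun (\<lambda>s. s)"
  unfolding pfun_def by (rule exI[of _ "[:0,1:]"]) simp

lemma pfun_add[intro]: "pfun f \<Longrightarrow> pfun g \<Longrightarrow> pfun (\<lambda>s. f s + g s)"
  unfolding pfun_def by (metis poly_add)

lemma pfun_mult[intro]: "pfun f \<Longrightarrow> pfun g \<Longrightarrow> pfun (\<lambda>s. f s * g s)"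
  unfolding pfun_def by (metis poly_mult)

lemma pfun_sum[intro]: "finite K \<Longrightarrow> (\<And>k. k \<in> K \<Longrightarrow> pfun (f k)) \<Longrightarrow> pfun (\<lambda>s. \<Sum>k\<in>K. f k s)"
  by (induction K rule: finite_induct) auto

lemma pfun_prod[intro]: "finite K \<Longrightarrow> (\<And>k. k \<in> K \<Longrightarrow> pfun (f k)) \<Longrightarrow> pfun (\<lambda>s. \<Prod>k\<in>K. f k s)"
  by (induction K rule: finite_induct) auto

lemma pfun_det:
  assumes "\<And>s. M s \<in> carrier_mat k k"
    and "\<And>i j. i < k \<Longrightarrow> j < k \<Longrightarrow> pfun (\<lambda>s. M s $$ (i,j))"
  shows "pfun (\<lambda>s. det (M s))"
proof -
  have "(\<lambda>s. det (M s)) = (\<lambda>s. \<Sum> p \<in> {p. p permutes {0 ..< k}}.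
     signof p * (\<Prod> i = 0 ..< k. M s $$ (i, p i)))"
    using det_def'[OF assms(1)] by auto
  moreover have "pfun (\<lambda>s. \<Sum> p \<in> {p. p permutes {0 ..< k}}.
     signof p * (\<Prod> i = 0 ..< k. M s $$ (i, p i)))"
  proof (intro pfun_sum pfun_mult pfun_prod pfun_const)
    show "finite {p. p permutes {0..<k}}" by (simp add: finite_permutations)
    fix p i assume "p \<in> {p. p permutes {0..<k}}" "i \<in> {0..<k}"
    then have "p i < k" "i < k" using permutes_in_image by fastforce+
    then show "pfun (\<lambda>s. M s $$ (i, p i))" using assms(2) by auto
  qed auto
  ultimately show ?thesis by simp
qed

lemma det_family_one:
  assumes "\<And>s. M s \<in> carrier_mat k k"
    and "\<And>i j. i < k \<Longrightarrow> j < k \<Longrightarrow> pfun (\<lambda>s. M s $$ (i,j))"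
    and "\<And>s. M s * M (-s) = 1\<^sub>m k"
    and "M 0 = 1\<^sub>m k"
  shows "det (M 1) = 1"
proof -
  obtain P where P: "\<And>s. det (M s) = poly P s"
    using pfun_det[OF assms(1,2)] unfolding pfun_def by blast
  have prod1: "poly P s * poly P (-s) = 1" for s
    using det_mult[OF assms(1) assms(1), of s "-s"] assms(3)[of s] P by simp
  have "constant (poly P)"
  proof (rule ccontr)
    assume "\<not> constant (poly P)"
    then obtain z where "poly P z = 0" using fundamental_theorem_of_algebra by blast
    then show False using prod1[of z] by simp
  qed
  then have "poly P 1 = poly P 0" unfolding constant_def by blast
  then show ?thesis using P[of 1] P[of 0] assms(4) by simp
qed


lemma Qgram_herm: "Qgram a j i = cnj (Qgram a i j)"
  unfolding Qgram_def by auto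

lemma Qgram_diag[simp]: "Qgram a i i = 1"
  unfolding Qgram_def by auto

definition hatv :: "nat \<Rightarrow> real \<Rightarrow> complex vec \<Rightarrow> complex vec" where
  "hatv n a y = vec n (\<lambda>i. \<Sum>j<n. cnj (y $ j) * Qgram a i j)"

lemma hatv_carrier[simp]: "hatv n a y \<in> carrier_vec n"
  unfolding hatv_def by simp

lemma Qgram_cnj[simp]: "cnj (Qgram a i j) = Qgram a j i"
  unfolding Qgram_def by auto

lemma Qform_hat: assumes "x \<in> carrier_vec n" shows "Qform n a x y = x \<bullet> hatv n a y"
proof -
  have "x \<bullet> hatv n a y = (\<Sum>i<n. x$i * (\<Sum>j<n. cnj(y$j) * Qgram a i j))"
    unfolding scalar_prod_def hatv_def by (simp add: atLeast0LessThan)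
  also have "\<dots> = Qform n a x y" unfolding Qform_def by (simp add: sum_distrib_left mult.assoc)
  finally show ?thesis by simp
qed

lemma Qform_herm: "Qform n a y x = cnj (Qform n a x y)"
proof -
  have "cnj (Qform n a x y) = (\<Sum>i<n. \<Sum>j<n. cnj (x$i) * y$j * Qgram a j i)"
    unfolding Qform_def cnj_sum by simp
  also have "\<dots> = (\<Sum>j<n. \<Sum>i<n. cnj (x$i) * y$j * Qgram a j i)" by (rule sum.swap)
  also have "\<dots> = Qform n a y x" unfolding Qform_def by (simp add: mult.commute mult.left_commute)
  finally show ?thesis by simp
qed

lemma Qform_add1: "x \<in> carrier_vec n \<Longrightarrow> y \<in> carrier_vec n \<Longrightarrow> Qform n a (x + y) z = Qform n a x z + Qform n a y z"
  by (simp add: Qform_hat add_scalar_prod_distrib[of _ n])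

lemma Qform_diff1: "x \<in> carrier_vec n \<Longrightarrow> y \<in> carrier_vec n \<Longrightarrow> Qform n a (x - y) z = Qform n a x z - Qform n a y z"
  by (simp add: Qform_hat minus_scalar_prod_distrib[of _ n])

lemma Qform_smult1: "x \<in> carrier_vec n \<Longrightarrow> Qform n a (c \<cdot>\<^sub>v x) z = c * Qform n a x z"
  by (simp add: Qform_hat smult_scalar_prod_distrib[of _ n])

lemma Qform_add2: "x \<in> carrier_vec n \<Longrightarrow> y \<in> carrier_vec n \<Longrightarrow> Qform n a z (x + y) = Qform n a z x + Qform n a z y"
  by (subst (1 2 3) Qform_herm) (simp add: Qform_add1)

lemma Qform_diff2: "x \<in> carrier_vec n \<Longrightarrow> y \<in> carrier_vec n \<Longrightarrow> Qform n a z (x - y) = Qform n a z x - Qform n a z y"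
  by (subst (1 2 3) Qform_herm) (simp add: Qform_diff1)

lemma Qform_smult2: "x \<in> carrier_vec n \<Longrightarrow> Qform n a z (c \<cdot>\<^sub>v x) = cnj c * Qform n a z x"
  by (subst (1 2) Qform_herm) (simp add: Qform_smult1)

lemma Qform_zero1[simp]: "Qform n a (0\<^sub>v n) z = 0"
  unfolding Qform_def by simp

lemma Qform_zero2[simp]: "Qform n a z (0\<^sub>v n) = 0"
  unfolding Qform_def by simp

lemma Qform_unit1: assumes "i < n" shows "Qform n a (unit_vec n i) y = (\<Sum>j<n. cnj (y $ j) * Qgram a i j)"
proof -
  have "Qform n a (unit_vec n i) y = (\<Sum>k<n. if k = i then (\<Sum>j<n. cnj (y $ j) * Qgram a k j) else 0)"
    unfolding Qform_def by (intro sum.cong) (auto simp: unit_vec_def)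
  also have "\<dots> = (\<Sum>j<n. cnj (y $ j) * Qgram a i j)" using assms by (simp add: sum.delta)
  finally show ?thesis .
qed

lemma Qform_unit2: assumes "j < n" shows "Qform n a x (unit_vec n j) = (\<Sum>i<n. x $ i * Qgram a i j)"
proof -
  have "Qform n a x (unit_vec n j) = (\<Sum>i<n. \<Sum>k<n. if k = j then x $ i * Qgram a i k else 0)"
    unfolding Qform_def by (intro sum.cong) (auto simp: unit_vec_def)
  also have "\<dots> = (\<Sum>i<n. x $ i * Qgram a i j)" using assms by (simp add: sum.delta)
  finally show ?thesis .
qed

lemma Qform_real: "Im (Qform n a x x) = 0"
  using arg_cong[OF Qform_herm[of n a x x], of Im] by simp

lemma Qform_via_units2:
  assumes "y \<in> carrier_vec n"
  shows "Qform n a x y = (\<Sum>j<n. cnj (y $ j) * Qform n a x (unit_vec n j))"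
proof -
  have "(\<Sum>j<n. cnj (y $ j) * Qform n a x (unit_vec n j)) = (\<Sum>j<n. cnj (y $ j) * (\<Sum>i<n. x $ i * Qgram a i j))"
    by (intro sum.cong) (simp_all add: Qform_unit2)
  also have "\<dots> = (\<Sum>j<n. \<Sum>i<n. x $ i * cnj (y $ j) * Qgram a i j)"
    by (simp add: sum_distrib_left mult.commute mult.left_commute)
  also have "\<dots> = Qform n a x y" unfolding Qform_def by (rule sum.swap)
  finally show ?thesis by simp
qed

lemma mat_unit_index: "(A :: complex mat) \<in> carrier_mat n n \<Longrightarrow> i < n \<Longrightarrow> j < n \<Longrightarrow> (A *\<^sub>v unit_vec n j) $ i = A $$ (i,j)"
  by (simp add: row_def)

lemma mat_eq_vecI:
  assumes "(A :: complex mat) \<in> carrier_mat n n" "B \<in> carrier_mat n n"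
    and "\<And>x. x \<in> carrier_vec n \<Longrightarrow> A *\<^sub>v x = B *\<^sub>v x"
  shows "A = B"
proof (rule eq_matI)
  fix i j assume "i < dim_row B" "j < dim_col B"
  then have ij: "i < n" "j < n" using assms(2) by auto
  have "A $$ (i,j) = (A *\<^sub>v unit_vec n j) $ i" using mat_unit_index[OF assms(1) ij] by simp
  also have "\<dots> = (B *\<^sub>v unit_vec n j) $ i" using assms(3)[of "unit_vec n j"] by simp
  also have "\<dots> = B $$ (i,j)" using mat_unit_index[OF assms(2) ij] by simp
  finally show "A $$ (i,j) = B $$ (i,j)" .
qed (insert assms, auto)

definition outer :: "complex vec \<Rightarrow> complex vec \<Rightarrow> complex mat" where
  "outer a b = mat (dim_vec a) (dim_vec b) (\<lambda>(i,j). a $ i * b $ j)"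

lemma outer_carrier[simp]: "a \<in> carrier_vec n \<Longrightarrow> b \<in> carrier_vec m \<Longrightarrow> outer a b \<in> carrier_mat n m"
  unfolding outer_def by auto

lemma outer_mult_vec:
  assumes "a \<in> carrier_vec n" "b \<in> carrier_vec m" "x \<in> carrier_vec m"
  shows "outer a b *\<^sub>v x = (b \<bullet> x) \<cdot>\<^sub>v a"
proof (rule eq_vecI)
  fix i assume "i < dim_vec ((b \<bullet> x) \<cdot>\<^sub>v a)"
  then have i: "i < n" using assms by auto
  show "(outer a b *\<^sub>v x) $ i = ((b \<bullet> x) \<cdot>\<^sub>v a) $ i"
    using assms i unfolding outer_def
    by (auto simp: row_def scalar_prod_def sum_distrib_right mult.commute mult.left_commute intro!: sum.cong)
      (simp add: sum_distrib_left)
qed (insert assms, auto simp: outer_def)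


lemma sum_split_ins:
  assumes "p < n"
  shows "(\<Sum>i<n. f i) = f p + (\<Sum>i<n-1. f (insert_index p i))"
proof -
  have inj: "inj_on (insert_index p) {..<n-1}" unfolding inj_on_def insert_index_def by auto
  have nin: "p \<notin> insert_index p ` {..<n-1}" unfolding insert_index_def by auto
  have eq: "{..<n} = insert p (insert_index p ` {..<n-1})"
  proof (intro equalityI subsetI)
    fix k assume k: "k \<in> {..<n}"
    show "k \<in> insert p (insert_index p ` {..<n-1})"
    proof (cases "k = p")
      case False
      show ?thesis
      proof (cases "k < p")
        case True
        then have "k = insert_index p k" "k < n - 1" using assms by (auto simp: insert_index_def)
        then show ?thesis by blast
      next
        case False
        then have "k = insert_index p (k - 1)" "k - 1 < n - 1" using \<open>k \<noteq> p\<close> k by (auto simp: insert_index_def)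
        then show ?thesis by blast
      qed
    qed simp
  next
    fix k assume "k \<in> insert p (insert_index p ` {..<n-1})"
    then show "k \<in> {..<n}" using assms by (auto simp: insert_index_def)
  qed
  show ?thesis unfolding eq using nin inj by (simp add: sum.reindex)
qed

lemma sum_if_less: "(k::nat) \<le> d \<Longrightarrow> (\<Sum>i<d. if i < k then f i else 0) = (\<Sum>i<k. f i)"
proof (induction d)
  case 0 then show ?case by simp
next
  case (Suc d)
  show ?case
  proof (cases "k \<le> d")
    case True then show ?thesis using Suc by simp
  next
    case False then have "k = Suc d" using Suc by simp
    then show ?thesis by simp
  qed
qed

lemma Qgram_ins: "Qgram a (insert_index p i) (insert_index p j) = Qgram a i j"
  unfolding Qgram_def insert_index_def by auto

locale mt =
  fixes d :: nat and \<alpha> :: real and p :: nat and w :: "complex vec"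
  assumes hd: "d \<ge> 5" and ha1: "0 < \<alpha>" and ha2: "\<alpha> < 1/2" and hint: "real d * \<alpha> \<in> \<int>"
    and hp: "p < d"
    and hw: "w \<in> carrier_vec d" and hw0: "w \<noteq> 0\<^sub>v d"
    and hwspan: "{y \<in> carrier_vec d. \<forall>h \<in> carrier_vec d. h $ p = 0 \<longrightarrow> Qform d \<alpha> y h = 0}
                 = {c \<cdot>\<^sub>v w | c. True}"
begin

abbreviation "Q \<equiv> Qform d \<alpha>"
abbreviation "Q' \<equiv> Qform (d-1) \<alpha>"
abbreviation "z \<equiv> zeta \<alpha>"
abbreviation e where "e i \<equiv> unit_vec d i"

definition "\<beta> = Q (e p) w"

definition vdel :: "complex vec \<Rightarrow> complex vec" where
  "vdel x = vec (d-1) (\<lambda>i. x $ insert_index p i)"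

definition vins :: "complex vec \<Rightarrow> complex vec" where
  "vins x = vec d (\<lambda>i. if i = p then 0 else x $ delete_index p i)"

lemma vdel_carrier[simp]: "vdel x \<in> carrier_vec (d-1)" unfolding vdel_def by simp
lemma vdel_carrier'[simp]: "vdel x \<in> carrier_vec (d - Suc 0)" unfolding vdel_def by simp
lemma vins_carrier[simp]: "vins x \<in> carrier_vec d" unfolding vins_def by simp
lemma vins_p[simp]: "vins x $ p = 0" unfolding vins_def using hp by simp

lemma ins_lt: "i < d - 1 \<Longrightarrow> insert_index p i < d"
  using hp unfolding insert_index_def by auto
lemma del_lt: "i < d \<Longrightarrow> i \<noteq> p \<Longrightarrow> delete_index p i < d - 1"
  using hp unfolding delete_index_def by auto
lemma ins_ne[simp]: "insert_index p i \<noteq> p"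
  unfolding insert_index_def by auto

lemma vdel_vins[simp]: "x \<in> carrier_vec (d-1) \<Longrightarrow> vdel (vins x) = x"
  unfolding vdel_def vins_def by (intro eq_vecI) (auto simp: ins_lt)

lemma vins_vdel: "x \<in> carrier_vec d \<Longrightarrow> x $ p = 0 \<Longrightarrow> vins (vdel x) = x"
proof (rule eq_vecI)
  fix i assume "x \<in> carrier_vec d" "x $ p = 0" "i < dim_vec x"
  then show "vins (vdel x) $ i = x $ i"
    unfolding vins_def vdel_def using del_lt[of i] insert_delete_index[of i p] by (cases "i = p") auto
qed (auto simp: vins_def)

lemma vdel_index[simp]: "i < d - 1 \<Longrightarrow> vdel x $ i = x $ insert_index p i"
  unfolding vdel_def by simp

lemma z_cnj: "cnj z * z = 1"
proof -
  have "cos (- 2 * pi * \<alpha>) * cos (- 2 * pi * \<alpha>) + sin (- 2 * pi * \<alpha>) * sin (- 2 * pi * \<alpha>) = 1"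
    using sin_cos_squared_add3[of "- 2 * pi * \<alpha>"] by simp
  then show ?thesis unfolding zeta_def by (simp add: complex_eq_iff)
qed

lemma z_im: "Im z < 0"
proof -
  have "0 < 2 * pi * \<alpha>" "2 * pi * \<alpha> < pi" using ha1 ha2 by (auto simp: pi_gt_zero)
  then have "sin (2 * pi * \<alpha>) > 0" by (intro sin_gt_zero) auto
  then show ?thesis unfolding zeta_def by simp
qed

lemma z_ne1: "z \<noteq> 1" using z_im by auto
lemma z_ne0: "z \<noteq> 0" using z_im by auto
lemma one_plus_z: "1 + z \<noteq> 0" using z_im by (auto simp: complex_eq_iff)
lemma one_plus_cz: "1 + cnj z \<noteq> 0" using z_im by (auto simp: complex_eq_iff)
lemma cz_ne1: "cnj z \<noteq> 1" using z_im by (auto simp: complex_eq_iff)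
lemma cz_ne0: "cnj z \<noteq> 0" using z_im by (auto simp: complex_eq_iff)

lemma z_pow: "z ^ d = 1"
proof -
  obtain k where k: "real d * \<alpha> = of_int k" using hint Ints_cases by blast
  have "z ^ d = cis (real d * (- 2 * pi * \<alpha>))" unfolding zeta_def DeMoivre by simp
  also have "real d * (- 2 * pi * \<alpha>) = 2 * pi * real_of_int (- k)" using k by (simp add: algebra_simps)
  also have "cis (2 * pi * real_of_int (- k)) = 1" by (rule cis_multiple_2pi) simp
  finally show ?thesis .
qed

lemma cz_pow: "cnj z ^ d = 1"
  using arg_cong[OF z_pow, of cnj] by simp

lemma gram_scaled: "(1 + z) * Qgram \<alpha> i k = 1 + (if i < k then z - 1 else 0) + (if i = k then z else 0)"
proof -
  have a: "(1 + z) * inverse (1 + z) = 1" using one_plus_z by simp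
  have b: "(1 + z) * inverse (1 + cnj z) = z"
  proof -
    have "1 + z = z * (1 + cnj z)" using z_cnj by (simp add: algebra_simps)
    then show ?thesis using one_plus_cz by (simp add: field_simps)
  qed
  show ?thesis unfolding Qgram_def using a b by (auto simp: complex_cnj_inverse)
qed

lemma Qe_scaled:
  assumes "x \<in> carrier_vec n" "k < n"
  shows "(1 + z) * Qform n \<alpha> x (unit_vec n k) = (\<Sum>i<n. x $ i) + (z - 1) * (\<Sum>i<k. x $ i) + z * x $ k"
proof -
  have "(1 + z) * Qform n \<alpha> x (unit_vec n k) = (\<Sum>i<n. x $ i * ((1 + z) * Qgram \<alpha> i k))"
    unfolding Qform_unit2[OF assms(2)] by (simp add: sum_distrib_left mult.commute mult.left_commute)
  also have "\<dots> = (\<Sum>i<n. x $ i + (z - 1) * (if i < k then x $ i else 0) + (if i = k then z * x $ k else 0))"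
    unfolding gram_scaled by (intro sum.cong) (auto simp: algebra_simps)
  also have "\<dots> = (\<Sum>i<n. x $ i) + (z - 1) * (\<Sum>i<n. if i < k then x $ i else 0) + z * x $ k"
    using assms(2) by (simp add: sum.distrib sum_distrib_left)
  also have "(\<Sum>i<n. if i < k then x $ i else 0) = (\<Sum>i<k. x $ i)"
    using assms(2) by (intro sum_if_less) simp
  finally show ?thesis .
qed

lemma nondeg:
  assumes x: "x \<in> carrier_vec d" and h: "\<And>k. k < d \<Longrightarrow> Q x (e k) = 0"
  shows "x = 0\<^sub>v d"
proof -
  define T where "T = (\<Sum>i<d. x $ i)"
  define S where "S k = (\<Sum>i<k. x $ i)" for k
  have eq: "T + (z - 1) * S k + z * x $ k = 0" if "k < d" for k
    using Qe_scaled[OF x that] h[OF that] unfolding T_def S_def by simp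
  have SS: "S (Suc k) = S k + x $ k" for k unfolding S_def by simp
  have step: "z * x $ Suc k = x $ k" if "Suc k < d" for k
  proof -
    have e1: "T + (z - 1) * (S k + x $ k) + z * x $ Suc k = 0" using eq[of "Suc k"] that unfolding SS by blast
    have e2: "T + (z - 1) * S k + z * x $ k = 0" using eq[of k] that by simp
    have "z * x $ Suc k = (T + (z - 1) * (S k + x $ k) + z * x $ Suc k)
        - (T + (z - 1) * S k + z * x $ k) + x $ k"
      by (simp add: algebra_simps)
    also have "\<dots> = x $ k" unfolding e1 e2 by simp
    finally show ?thesis .
  qed
  have form: "x $ k = cnj z ^ k * x $ 0" if "k < d" for k
    using that
  proof (induction k)
    case (Suc k)
    have "x $ Suc k = (cnj z * z) * x $ Suc k" using z_cnj by simp
    also have "\<dots> = cnj z * (z * x $ Suc k)" by (simp only: mult.assoc)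
    also have "\<dots> = cnj z * x $ k" using step[OF Suc.prems] by simp
    also have "\<dots> = cnj z * (cnj z ^ k * x $ 0)" using Suc by simp
    finally show ?case by (simp only: power_Suc mult.assoc)
  qed simp
  have "T = (\<Sum>i<d. x $ 0 * cnj z ^ i)" unfolding T_def
  proof (rule sum.cong[OF refl])
    fix i assume "i \<in> {..<d}" then show "x $ i = x $ 0 * cnj z ^ i" using form[of i] by (simp add: mult.commute)
  qed
  also have "\<dots> = x $ 0 * (\<Sum>i<d. cnj z ^ i)" by (simp only: sum_distrib_left)
  also have "(\<Sum>i<d. cnj z ^ i) = 0" using cz_ne1 cz_pow by (simp add: sum_gp_strict)
  finally have T0: "T = 0" by simp
  have "z * x $ 0 = 0" using eq[of 0] hp unfolding T0 S_def by simp
  then have x0: "x $ 0 = 0" using z_ne0 by simp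
  show ?thesis
  proof (rule eq_vecI)
    fix i assume "i < dim_vec (0\<^sub>v d)"
    then show "x $ i = 0\<^sub>v d $ i" using form[of i] x0 by simp
  qed (insert x, simp)
qed

section \<open>Reduction to the smaller form\<close>

lemma Q_red:
  assumes "x \<in> carrier_vec d" "y \<in> carrier_vec d" "x $ p = 0" "y $ p = 0"
  shows "Q x y = Q' (vdel x) (vdel y)"
proof -
  have "Q x y = (\<Sum>i<d. \<Sum>j<d. x $ i * cnj (y $ j) * Qgram \<alpha> i j)" unfolding Qform_def ..
  also have "\<dots> = (\<Sum>j<d. x $ p * cnj (y $ j) * Qgram \<alpha> p j) +
      (\<Sum>i<d-1. \<Sum>j<d. x $ insert_index p i * cnj (y $ j) * Qgram \<alpha> (insert_index p i) j)"
    by (rule sum_split_ins[OF hp])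
  also have "\<dots> = (\<Sum>i<d-1. \<Sum>j<d. x $ insert_index p i * cnj (y $ j) * Qgram \<alpha> (insert_index p i) j)"
    using assms by simp
  also have "\<dots> = (\<Sum>i<d-1. \<Sum>j<d-1. x $ insert_index p i * cnj (y $ insert_index p j)
       * Qgram \<alpha> (insert_index p i) (insert_index p j))"
  proof (rule sum.cong[OF refl])
    fix i
    show "(\<Sum>j<d. x $ insert_index p i * cnj (y $ j) * Qgram \<alpha> (insert_index p i) j) =
      (\<Sum>j<d-1. x $ insert_index p i * cnj (y $ insert_index p j) * Qgram \<alpha> (insert_index p i) (insert_index p j))"
      using sum_split_ins[OF hp, of "\<lambda>j. x $ insert_index p i * cnj (y $ j) * Qgram \<alpha> (insert_index p i) j"] assms
      by simp
  qed
  also have "\<dots> = Q' (vdel x) (vdel y)"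
    unfolding Qform_def Qgram_ins by simp
  finally show ?thesis .
qed

lemma Q_red_ins:
  assumes "x \<in> carrier_vec (d-1)" "y \<in> carrier_vec (d-1)"
  shows "Q (vins x) (vins y) = Q' x y"
  using Q_red[of "vins x" "vins y"] assms by simp

lemma w_in: "w \<in> {y \<in> carrier_vec d. \<forall>h \<in> carrier_vec d. h $ p = 0 \<longrightarrow> Q y h = 0}"
  using hwspan by (auto intro: exI[of _ 1])

lemma Qwh: "h \<in> carrier_vec d \<Longrightarrow> h $ p = 0 \<Longrightarrow> Q w h = 0"
  using w_in by auto

lemma Qxw: assumes x: "x \<in> carrier_vec d" shows "Q x w = x $ p * \<beta>"
proof -
  have "x = (x - x $ p \<cdot>\<^sub>v e p) + x $ p \<cdot>\<^sub>v e p" using x by (intro eq_vecI) auto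
  then have "Q x w = Q (x - x $ p \<cdot>\<^sub>v e p) w + Q (x $ p \<cdot>\<^sub>v e p) w"
    using x Qform_add1 by (metis minus_carrier_vec smult_carrier_vec unit_vec_carrier)
  also have "Q (x - x $ p \<cdot>\<^sub>v e p) w = cnj (Q w (x - x $ p \<cdot>\<^sub>v e p))" by (rule Qform_herm)
  also have "Q w (x - x $ p \<cdot>\<^sub>v e p) = 0" using x hp by (intro Qwh) auto
  also have "Q (x $ p \<cdot>\<^sub>v e p) w = x $ p * \<beta>" unfolding \<beta>_def by (simp add: Qform_smult1)
  finally show ?thesis by simp
qed

lemma Qwx: "x \<in> carrier_vec d \<Longrightarrow> Q w x = cnj (x $ p * \<beta>)"
  using Qxw Qform_herm by metis

definition kv :: "complex vec" where "kv = vec (d-1) (\<lambda>k. cnj z ^ k)"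

lemma kv_kernel: assumes "k < d - 1" shows "Q' kv (unit_vec (d-1) k) = 0"
proof -
  define cz where "cz = cnj z"
  have czz: "z * cz = 1" using z_cnj unfolding cz_def by (simp add: mult.commute)
  have c1: "cz \<noteq> 1" "1 - cz \<noteq> 0" using cz_ne1 unfolding cz_def by auto
  have pd: "cz ^ (d - 1) = z"
  proof -
    obtain m where m: "d = Suc m" using hd by (cases d) auto
    have A: "cz ^ (d-1) * cz = 1" using cz_pow unfolding cz_def m by (simp only: diff_Suc_1 power_Suc2)
    have "cz ^ (d-1) = cz ^ (d-1) * (cz * z)" using czz by (simp add: mult.commute)
    also have "\<dots> = (cz ^ (d-1) * cz) * z" by (simp only: mult.assoc)
    also have "\<dots> = z" using A by simp
    finally show ?thesis .
  qed
  have S1: "(1 - cz) * (\<Sum>i<d-1. cz ^ i) = 1 - z" using c1 pd by (simp add: sum_gp_strict)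
  have S2: "(1 - cz) * (\<Sum>i<k. cz ^ i) = 1 - cz ^ k" using c1 by (simp add: sum_gp_strict)
  have zk: "z * cz ^ k * cz = cz ^ k" using czz by (simp add: algebra_simps)
  have "(1 - cz) * ((1 + z) * Q' kv (unit_vec (d-1) k)) =
     (1 - cz) * ((\<Sum>i<d-1. cz ^ i) + (z - 1) * (\<Sum>i<k. cz ^ i) + z * cz ^ k)"
    using Qe_scaled[of kv "d-1" k] assms unfolding kv_def cz_def by simp
  also have "\<dots> = (1 - cz) * (\<Sum>i<d-1. cz ^ i) + (z - 1) * ((1 - cz) * (\<Sum>i<k. cz ^ i)) + z * cz ^ k - z * cz ^ k * cz"
    by (simp add: algebra_simps)
  also have "\<dots> = 0" unfolding S1 S2 zk by (simp add: algebra_simps)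
  finally show ?thesis using c1 one_plus_z by simp
qed

lemma kv_carrier[simp]: "kv \<in> carrier_vec (d-1)" unfolding kv_def by simp
lemma kv_carrier'[simp]: "kv \<in> carrier_vec (d - Suc 0)" unfolding kv_def by simp

lemma kv_orth: assumes "y \<in> carrier_vec (d-1)" shows "Q' kv y = 0"
  using Qform_via_units2[OF assms, where x = kv and a = \<alpha>] kv_kernel by simp

lemma wp0: "w $ p = 0"
proof -
  define v where "v = vins kv"
  have "v \<in> {y \<in> carrier_vec d. \<forall>h \<in> carrier_vec d. h $ p = 0 \<longrightarrow> Q y h = 0}"
  proof (safe)
    show "v \<in> carrier_vec d" unfolding v_def by simp
    fix h :: "complex vec" assume h: "h \<in> carrier_vec d" "h $ p = 0"
    have "Q v h = Q' kv (vdel h)" unfolding v_def using Q_red[of "vins kv" h] h vdel_vins[OF kv_carrier] by simp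
    then show "Q v h = 0" using kv_orth by simp
  qed
  then obtain c where c: "v = c \<cdot>\<^sub>v w" using hwspan by auto
  have "v $ insert_index p 0 = 1"
    unfolding v_def vins_def kv_def using hd ins_lt[of 0] by simp
  then have "c \<noteq> 0" using c ins_lt[of 0] hd hw by auto
  moreover have "v $ p = c * w $ p" using c hp hw by simp
  ultimately show ?thesis unfolding v_def by simp
qed

lemma Qww: "Q w w = 0" using Qxw[OF hw] wp0 by simp

lemma beta_ne0: "\<beta> \<noteq> 0"
proof
  assume b: "\<beta> = 0"
  have "Q w (e k) = 0" if "k < d" for k using Qwx[of "e k"] b by simp
  then have "w = 0\<^sub>v d" using nondeg hw by blast
  then show False using hw0 by simp
qed

end


lemma imag_multiple:
  fixes c b :: complex
  assumes "b \<noteq> 0" "Re (c * cnj b) = 0"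
  shows "\<exists>s::real. c = \<i> * of_real s * b"
proof -
  define u where "u = c * cnj b"
  have u: "u = \<i> * of_real (Im u)" using assms(2) unfolding u_def by (simp add: complex_eq_iff)
  have nb: "b * cnj b = of_real ((cmod b)\<^sup>2)" by (rule complex_norm_square[symmetric])
  have nb0: "cmod b \<noteq> 0" using assms(1) by simp
  have "c * of_real ((cmod b)\<^sup>2) = u * b" unfolding u_def nb[symmetric] by (simp add: algebra_simps)
  also have "\<dots> = \<i> * of_real (Im u) * b" using u by simp
  finally have "c = \<i> * of_real (Im u / (cmod b)\<^sup>2) * b" using nb0
    by (simp add: field_simps)
  then show ?thesis by blast
qed

context mt begin

definition Tset :: "complex mat set" where
  "Tset = {g \<in> SU_Q d \<alpha>. g *\<^sub>v w = w}"

lemma TsetD: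
  assumes "g \<in> Tset"
  shows "g \<in> carrier_mat d d" "det g = 1" "g *\<^sub>v w = w"
    "\<And>x y. x \<in> carrier_vec d \<Longrightarrow> y \<in> carrier_vec d \<Longrightarrow> Q (g *\<^sub>v x) (g *\<^sub>v y) = Q x y"
  using assms unfolding Tset_def SU_Q_def preserves_form_def by auto

lemma TsetI:
  assumes "g \<in> carrier_mat d d" "det g = 1" "g *\<^sub>v w = w"
    "\<And>x y. x \<in> carrier_vec d \<Longrightarrow> y \<in> carrier_vec d \<Longrightarrow> Q (g *\<^sub>v x) (g *\<^sub>v y) = Q x y"
  shows "g \<in> Tset"
  using assms unfolding Tset_def SU_Q_def preserves_form_def by auto

lemma fix_p_vec:
  assumes g: "g \<in> carrier_mat d d" and gw: "g *\<^sub>v w = w"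
    and pres: "\<And>x y. x \<in> carrier_vec d \<Longrightarrow> y \<in> carrier_vec d \<Longrightarrow> Q (g *\<^sub>v x) (g *\<^sub>v y) = Q x y"
    and x: "x \<in> carrier_vec d"
  shows "(g *\<^sub>v x) $ p = x $ p"
proof -
  have "(g *\<^sub>v x) $ p * \<beta> = Q (g *\<^sub>v x) w" using Qxw g x by simp
  also have "\<dots> = Q (g *\<^sub>v x) (g *\<^sub>v w)" using gw by simp
  also have "\<dots> = Q x w" using pres x hw by simp
  also have "\<dots> = x $ p * \<beta>" using Qxw x by simp
  finally show ?thesis using beta_ne0 by simp
qed

definition rowunit :: "complex mat \<Rightarrow> bool" where
  "rowunit g \<longleftrightarrow> (\<forall>j<d. g $$ (p,j) = (if j = p then 1 else 0))"

lemma fix_p_rowunit: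
  assumes g: "g \<in> carrier_mat d d" and gw: "g *\<^sub>v w = w"
    and pres: "\<And>x y. x \<in> carrier_vec d \<Longrightarrow> y \<in> carrier_vec d \<Longrightarrow> Q (g *\<^sub>v x) (g *\<^sub>v y) = Q x y"
  shows "rowunit g"
  unfolding rowunit_def
proof (intro allI impI)
  fix j assume j: "j < d"
  have "g $$ (p,j) = (g *\<^sub>v e j) $ p" using mat_unit_index[OF g hp j] by simp
  also have "\<dots> = e j $ p" using fix_p_vec[OF g gw pres] j by simp
  finally show "g $$ (p,j) = (if j = p then 1 else 0)" using hp j by simp
qed

lemma Tset_rowunit: "g \<in> Tset \<Longrightarrow> rowunit g"
  using fix_p_rowunit TsetD by blast

lemma rowunit_vec:
  assumes "g \<in> carrier_mat d d" "rowunit g" "x \<in> carrier_vec d"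
  shows "(g *\<^sub>v x) $ p = x $ p"
proof -
  have "(g *\<^sub>v x) $ p = (\<Sum>j<d. g $$ (p,j) * x $ j)"
    using assms hp by (simp add: row_def scalar_prod_def atLeast0LessThan)
  also have "\<dots> = (\<Sum>j<d. if j = p then x $ j else 0)"
    using assms(2) unfolding rowunit_def by (intro sum.cong) auto
  also have "\<dots> = x $ p" using hp by simp
  finally show ?thesis .
qed

lemma rowunit_det:
  assumes g: "g \<in> carrier_mat d d" and r: "rowunit g"
  shows "det g = det (mat_delete g p p)"
proof -
  have "det g = (\<Sum>j<d. g $$ (p,j) * cofactor g p j)" by (rule laplace_expansion_row[OF g hp])
  also have "\<dots> = (\<Sum>j<d. if j = p then cofactor g p j else 0)"
    using r unfolding rowunit_def by (intro sum.cong) auto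
  also have "\<dots> = cofactor g p p" using hp by simp
  also have "\<dots> = det (mat_delete g p p)" unfolding cofactor_def by simp
  finally show ?thesis .
qed

lemma rowunit_ins:
  assumes g: "g \<in> carrier_mat d d" and r: "rowunit g" and x: "x \<in> carrier_vec (d-1)"
  shows "g *\<^sub>v vins x = vins (mat_delete g p p *\<^sub>v x)"
proof (rule eq_vecI)
  have dimv: "dim_vec (vins y) = d" for y by (simp add: vins_def)
  fix i assume "i < dim_vec (vins (mat_delete g p p *\<^sub>v x))"
  then have i: "i < d" by (simp add: vins_def)
  show "(g *\<^sub>v vins x) $ i = vins (mat_delete g p p *\<^sub>v x) $ i"
  proof (cases "i = p")
    case True
    then show ?thesis using rowunit_vec[OF g r, of "vins x"] by simp
  next
    case False
    have di: "delete_index p i < d - 1" using del_lt[OF i False] .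
    have "(g *\<^sub>v vins x) $ i = (\<Sum>j<d. g $$ (i,j) * vins x $ j)"
      using g i by (simp add: row_def scalar_prod_def atLeast0LessThan dimv)
    also have "\<dots> = g $$ (i,p) * vins x $ p + (\<Sum>j<d-1. g $$ (i, insert_index p j) * vins x $ insert_index p j)"
      by (rule sum_split_ins[OF hp])
    also have "\<dots> = (\<Sum>j<d-1. g $$ (i, insert_index p j) * x $ j)"
      unfolding vins_def using ins_lt hp by (auto intro!: sum.cong)
    also have "\<dots> = (mat_delete g p p *\<^sub>v x) $ delete_index p i"
      using g x di insert_delete_index[OF False]
      by (auto simp: row_def scalar_prod_def atLeast0LessThan mat_delete_def insert_index_def intro!: sum.cong)
    also have "\<dots> = vins (mat_delete g p p *\<^sub>v x) $ i"
      unfolding vins_def using i False by simp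
    finally show ?thesis .
  qed
qed (insert g, auto simp: vins_def)

section \<open>The central one-parameter group\<close>

definition kt :: "real \<Rightarrow> complex mat" where
  "kt t = mat d d (\<lambda>(i,j). (if i = j then 1 else 0) + (if j = p then \<i> * of_real t * \<beta> * w $ i else 0))"

lemma kt_carrier[simp]: "kt t \<in> carrier_mat d d" unfolding kt_def by simp

lemma kt_vec:
  assumes x: "x \<in> carrier_vec d"
  shows "kt t *\<^sub>v x = x + (\<i> * of_real t * Q x w) \<cdot>\<^sub>v w"
proof (rule eq_vecI)
  fix i assume "i < dim_vec (x + (\<i> * of_real t * Q x w) \<cdot>\<^sub>v w)"
  then have i: "i < d" using x hw by simp
  have "(kt t *\<^sub>v x) $ i = (\<Sum>j<d. ((if i = j then 1 else 0) + (if j = p then \<i> * of_real t * \<beta> * w $ i else 0)) * x $ j)"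
    using i x unfolding kt_def by (simp add: row_def scalar_prod_def atLeast0LessThan)
  also have "\<dots> = (\<Sum>j<d. (if i = j then x $ j else 0) + (if j = p then \<i> * of_real t * \<beta> * w $ i * x $ j else 0))"
    by (intro sum.cong) (auto simp: algebra_simps)
  also have "\<dots> = (\<Sum>j<d. (if i = j then x $ j else 0)) + (\<Sum>j<d. if j = p then \<i> * of_real t * \<beta> * w $ i * x $ j else 0)"
    by (rule sum.distrib)
  also have "\<dots> = x $ i + \<i> * of_real t * \<beta> * w $ i * x $ p" using i hp by simp
  also have "\<dots> = (x + (\<i> * of_real t * Q x w) \<cdot>\<^sub>v w) $ i" using i x hw Qxw[OF x] by simp
  finally show "(kt t *\<^sub>v x) $ i = (x + (\<i> * of_real t * Q x w) \<cdot>\<^sub>v w) $ i" .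
qed (insert x hw, simp add: kt_def)

lemma kt_w: "kt t *\<^sub>v w = w"
  using kt_vec[OF hw] Qww hw by (auto intro!: eq_vecI)

lemma kt_pres:
  assumes x: "x \<in> carrier_vec d" and y: "y \<in> carrier_vec d"
  shows "Q (kt t *\<^sub>v x) (kt t *\<^sub>v y) = Q x y"
proof -
  define a where "a = \<i> * of_real t * Q x w"
  define b where "b = \<i> * of_real t * Q y w"
  have "Q (kt t *\<^sub>v x) (kt t *\<^sub>v y) = Q (x + a \<cdot>\<^sub>v w) (y + b \<cdot>\<^sub>v w)"
    unfolding a_def b_def kt_vec[OF x] kt_vec[OF y] ..
  also have "\<dots> = Q x y + (cnj b * Q x w + a * Q w y) + a * cnj b * Q w w"
    using x y hw by (simp add: Qform_add1 Qform_add2 Qform_smult1 Qform_smult2 algebra_simps)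
  also have "cnj b * Q x w + a * Q w y = 0" unfolding a_def b_def using Qform_herm[of d \<alpha> w y] by simp
  finally show ?thesis using Qww by simp
qed

lemma kt_det: "det (kt t) = 1"
proof -
  have ru: "rowunit (kt t)" unfolding rowunit_def kt_def using wp0 hp by auto
  have "mat_delete (kt t) p p = 1\<^sub>m (d-1)"
    unfolding mat_delete_def kt_def using ins_lt ins_ne
    by (intro eq_matI) (auto simp: insert_index_def)
  then show ?thesis using rowunit_det[OF kt_carrier ru] by simp
qed

lemma kt_Tset: "kt t \<in> Tset"
  by (intro TsetI kt_carrier kt_det kt_w kt_pres)

lemma kt_central_vec:
  assumes "g \<in> Tset" "x \<in> carrier_vec d"
  shows "g *\<^sub>v (kt t *\<^sub>v x) = kt t *\<^sub>v (g *\<^sub>v x)"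
proof -
  note gT = TsetD[OF assms(1)]
  have "g *\<^sub>v (kt t *\<^sub>v x) = g *\<^sub>v x + (\<i> * of_real t * Q x w) \<cdot>\<^sub>v (g *\<^sub>v w)"
    unfolding kt_vec[OF assms(2)] using gT(1) assms(2) hw
    by (simp add: mult_add_distrib_mat_vec mult_mat_vec)
  also have "\<dots> = g *\<^sub>v x + (\<i> * of_real t * Q (g *\<^sub>v x) w) \<cdot>\<^sub>v w"
    using gT(3) gT(4)[OF assms(2) hw] by simp
  also have "\<dots> = kt t *\<^sub>v (g *\<^sub>v x)" using kt_vec gT(1) assms(2) by simp
  finally show ?thesis .
qed

lemma kt_central:
  assumes "g \<in> Tset"
  shows "g * kt t = kt t * g"
proof (rule mat_eq_vecI[of _ d])
  note g = TsetD(1)[OF assms]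
  fix x :: "complex vec" assume x: "x \<in> carrier_vec d"
  show "g * kt t *\<^sub>v x = kt t * g *\<^sub>v x"
    using assoc_mult_mat_vec[OF g kt_carrier x] assoc_mult_mat_vec[OF kt_carrier g x] kt_central_vec[OF assms x]
    by simp
qed (insert TsetD(1)[OF assms], auto intro!: mult_carrier_mat[of _ d d _ d])

lemma kt_add: "kt s * kt t = kt (s + t)"
proof (rule mat_eq_vecI[of _ d])
  fix x :: "complex vec" assume x: "x \<in> carrier_vec d"
  have "kt s * kt t *\<^sub>v x = kt s *\<^sub>v (kt t *\<^sub>v x)" by (rule assoc_mult_mat_vec[OF kt_carrier kt_carrier x])
  also have "\<dots> = x + (\<i> * of_real t * Q x w) \<cdot>\<^sub>v w + (\<i> * of_real s * Q (x + (\<i> * of_real t * Q x w) \<cdot>\<^sub>v w) w) \<cdot>\<^sub>v w"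
    using x hw by (simp add: kt_vec)
  also have "Q (x + (\<i> * of_real t * Q x w) \<cdot>\<^sub>v w) w = Q x w"
    using x hw Qww by (simp add: Qform_add1 Qform_smult1)
  also have "x + (\<i> * of_real t * Q x w) \<cdot>\<^sub>v w + (\<i> * of_real s * Q x w) \<cdot>\<^sub>v w = kt (s + t) *\<^sub>v x"
    using x hw by (intro eq_vecI) (auto simp: kt_vec algebra_simps)
  finally show "kt s * kt t *\<^sub>v x = kt (s + t) *\<^sub>v x" .
qed (auto intro!: mult_carrier_mat[of _ d d _ d])

lemma kt_zero: "kt 0 = 1\<^sub>m d"
  unfolding kt_def by (intro eq_matI) auto

end


lemma adj_inv:
  assumes g: "(g :: complex mat) \<in> carrier_mat n n" and dg: "det g = 1"
  shows "adj_mat g \<in> carrier_mat n n" "g * adj_mat g = 1\<^sub>m n" "adj_mat g * g = 1\<^sub>m n"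
  using adj_mat[OF g] dg by auto

context mt begin

lemma Tset_mult:
  assumes "g \<in> Tset" "h \<in> Tset" shows "g * h \<in> Tset"
proof -
  note G = TsetD[OF assms(1)] and H = TsetD[OF assms(2)]
  show ?thesis
  proof (rule TsetI)
    show gh: "g * h \<in> carrier_mat d d" using G(1) H(1) by simp
    show "det (g * h) = 1" using det_mult[OF G(1) H(1)] G(2) H(2) by simp
    show "g * h *\<^sub>v w = w" using assoc_mult_mat_vec[OF G(1) H(1) hw] G(3) H(3) by simp
    fix x y :: "complex vec" assume x: "x \<in> carrier_vec d" and y: "y \<in> carrier_vec d"
    show "Q (g * h *\<^sub>v x) (g * h *\<^sub>v y) = Q x y"
      using assoc_mult_mat_vec[OF G(1) H(1) x] assoc_mult_mat_vec[OF G(1) H(1) y]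
        G(4) H(4) x y H(1) by simp
  qed
qed

lemma Tset_adj:
  assumes "g \<in> Tset" shows "adj_mat g \<in> Tset" "g * adj_mat g = 1\<^sub>m d" "adj_mat g * g = 1\<^sub>m d"
proof -
  note G = TsetD[OF assms(1)]
  note A = adj_inv[OF G(1) G(2)]
  show "g * adj_mat g = 1\<^sub>m d" "adj_mat g * g = 1\<^sub>m d" using A by auto
  show "adj_mat g \<in> Tset"
  proof (rule TsetI)
    show "adj_mat g \<in> carrier_mat d d" using A by simp
    show "det (adj_mat g) = 1" using det_mult[OF G(1) A(1)] A(2) G(2) by simp
    have "adj_mat g *\<^sub>v w = adj_mat g *\<^sub>v (g *\<^sub>v w)" using G(3) by simp
    also have "\<dots> = w" using assoc_mult_mat_vec[OF A(1) G(1) hw] A(3) hw by simp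
    finally show "adj_mat g *\<^sub>v w = w" .
    fix x y :: "complex vec" assume x: "x \<in> carrier_vec d" and y: "y \<in> carrier_vec d"
    have "Q (adj_mat g *\<^sub>v x) (adj_mat g *\<^sub>v y) = Q (g *\<^sub>v (adj_mat g *\<^sub>v x)) (g *\<^sub>v (adj_mat g *\<^sub>v y))"
      using G(4) A(1) x y by simp
    also have "\<dots> = Q x y"
      using assoc_mult_mat_vec[OF G(1) A(1) x, symmetric] assoc_mult_mat_vec[OF G(1) A(1) y, symmetric] A(2) x y
      by simp
    finally show "Q (adj_mat g *\<^sub>v x) (adj_mat g *\<^sub>v y) = Q x y" .
  qed
qed

lemma Qee: "Q (e p) (e p) = 1"
proof -
  have "Q (e p) (e p) = (\<Sum>j<d. cnj (e p $ j) * Qgram \<alpha> p j)" by (rule Qform_unit1[OF hp])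
  also have "\<dots> = (\<Sum>j<d. if j = p then 1 else 0)" by (intro sum.cong) (auto simp: unit_vec_def)
  also have "\<dots> = 1" using hp by simp
  finally show ?thesis .
qed

lemma Tset_same_restr:
  assumes g: "g \<in> Tset" and g': "g' \<in> Tset"
    and same: "\<And>i j. i < d \<Longrightarrow> j < d \<Longrightarrow> j \<noteq> p \<Longrightarrow> g' $$ (i,j) = g $$ (i,j)"
  shows "\<exists>t. g' = g * kt t"
proof -
  note G = TsetD[OF g] and G' = TsetD[OF g']
  note A = Tset_adj[OF g]
  note AT = TsetD[OF A(1)]
  define \<delta> where "\<delta> = g' *\<^sub>v e p - g *\<^sub>v e p"
  have \<delta>c: "\<delta> \<in> carrier_vec d" unfolding \<delta>_def using G(1) G'(1) by simp
  have colj: "g' *\<^sub>v e j = g *\<^sub>v e j" if "j < d" "j \<noteq> p" for j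
    using G(1) G'(1) same that by (intro eq_vecI) (auto simp: mat_unit_index)
  define y where "y = adj_mat g *\<^sub>v \<delta>"
  have yc: "y \<in> carrier_vec d" unfolding y_def using AT(1) \<delta>c by simp
  have gy: "g *\<^sub>v y = \<delta>" unfolding y_def
    using assoc_mult_mat_vec[OF G(1) AT(1) \<delta>c, symmetric] A(2) \<delta>c by simp
  have Qyj: "Q y (e j) = 0" if "j < d" "j \<noteq> p" for j
  proof -
    have "Q y (e j) = Q (g *\<^sub>v y) (g *\<^sub>v e j)" using G(4) yc that by simp
    also have "\<dots> = Q (g' *\<^sub>v e p) (g' *\<^sub>v e j) - Q (g *\<^sub>v e p) (g *\<^sub>v e j)"
      unfolding gy \<delta>_def using colj[OF that] G(1) G'(1) by (simp add: Qform_diff1)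
    also have "\<dots> = 0" using G(4) G'(4) hp that by simp
    finally show ?thesis .
  qed
  have "y \<in> {y \<in> carrier_vec d. \<forall>h \<in> carrier_vec d. h $ p = 0 \<longrightarrow> Q y h = 0}"
  proof (safe)
    show "y \<in> carrier_vec d" by fact
    fix h :: "complex vec" assume h: "h \<in> carrier_vec d" "h $ p = 0"
    have "Q y h = (\<Sum>j<d. cnj (h $ j) * Q y (e j))" by (rule Qform_via_units2[OF h(1)])
    also have "\<dots> = 0" using Qyj h(2) by (intro sum.neutral) auto
    finally show "Q y h = 0" .
  qed
  then obtain c where c: "y = c \<cdot>\<^sub>v w" using hwspan by auto
  have \<delta>w: "\<delta> = c \<cdot>\<^sub>v w" using gy c G(1) G(3) hw by (simp add: mult_mat_vec)
  have "g' *\<^sub>v e p = g *\<^sub>v e p + \<delta>"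
    unfolding \<delta>_def using G(1) G'(1) by (intro eq_vecI) auto
  then have gep: "g' *\<^sub>v e p = g *\<^sub>v e p + c \<cdot>\<^sub>v w" using \<delta>w by simp
  have Qgpw: "Q (g *\<^sub>v e p) w = \<beta>" using G(4)[of "e p" w] G(3) hw hp unfolding \<beta>_def by simp
  have "1 = Q (g' *\<^sub>v e p) (g' *\<^sub>v e p)" using G'(4) Qee by simp
  also have "\<dots> = Q (g *\<^sub>v e p) (g *\<^sub>v e p) + cnj c * Q (g *\<^sub>v e p) w + c * Q w (g *\<^sub>v e p) + c * cnj c * Q w w"
    unfolding gep using G(1) hw by (simp add: Qform_add1 Qform_add2 Qform_smult1 Qform_smult2 algebra_simps)
  also have "Q w (g *\<^sub>v e p) = cnj \<beta>" using Qform_herm[of d \<alpha> w] Qgpw by simp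
  also have "Q (g *\<^sub>v e p) (g *\<^sub>v e p) = 1" using G(4) Qee by simp
  finally have "cnj c * \<beta> + c * cnj \<beta> = 0" using Qgpw Qww by simp
  then have "Re (cnj c * \<beta> + c * cnj \<beta>) = 0" by simp
  then have "Re (c * cnj \<beta>) = 0" by simp
  then obtain s where s: "c = \<i> * of_real s * \<beta>" using imag_multiple beta_ne0 by blast
  have "g' = g * kt s"
  proof (rule mat_eq_vecI[of _ d])
    show "g' \<in> carrier_mat d d" using G'(1) .
    show "g * kt s \<in> carrier_mat d d" using G(1) by simp
    fix x :: "complex vec" assume x: "x \<in> carrier_vec d"
    have g'eq: "g' = g + outer \<delta> (e p)"
    proof (rule eq_matI)
      fix i j assume ij: "i < dim_row (g + outer \<delta> (e p))" "j < dim_col (g + outer \<delta> (e p))"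
      then have i: "i < d" and j: "j < d" using G(1) \<delta>c by (auto simp: outer_def)
      show "g' $$ (i,j) = (g + outer \<delta> (e p)) $$ (i,j)"
      proof (cases "j = p")
        case True
        then show ?thesis using i j G(1) G'(1) \<delta>c unfolding \<delta>_def outer_def
          by (simp add: mat_unit_index)
      next
        case False
        then show ?thesis using i j G(1) \<delta>c same[OF i j False] unfolding outer_def by (simp add: unit_vec_def)
      qed
    qed (insert G(1) G'(1) \<delta>c, auto simp: outer_def)
    have "g' *\<^sub>v x = g *\<^sub>v x + outer \<delta> (e p) *\<^sub>v x"
      unfolding g'eq using G(1) \<delta>c x by (simp add: add_mult_distrib_mat_vec)
    also have "outer \<delta> (e p) *\<^sub>v x = x $ p \<cdot>\<^sub>v \<delta>"
      using outer_mult_vec[OF \<delta>c _ x, of "e p"] x hp by simp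
    also have "g *\<^sub>v x + x $ p \<cdot>\<^sub>v \<delta> = g *\<^sub>v (kt s *\<^sub>v x)"
      unfolding kt_vec[OF x] \<delta>w s Qxw[OF x] using G(1) G(3) x hw
      by (simp add: mult_add_distrib_mat_vec mult_mat_vec smult_smult_assoc mult.commute mult.left_commute)
    also have "\<dots> = g * kt s *\<^sub>v x" using assoc_mult_mat_vec[OF G(1) kt_carrier x] by simp
    finally show "g' *\<^sub>v x = g * kt s *\<^sub>v x" .
  qed
  then show ?thesis by blast
qed

lemma Tset_restr:
  assumes g: "g \<in> Tset"
  shows "mat_delete g p p \<in> SU_star (d-1) \<alpha>"
proof -
  note G = TsetD[OF g]
  have ru: "rowunit g" using Tset_rowunit[OF g] .
  define h where "h = mat_delete g p p"
  have hc: "h \<in> carrier_mat (d-1) (d-1)" unfolding h_def using mat_delete_carrier[OF G(1)] .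
  have hdet: "det h = 1" unfolding h_def using rowunit_det[OF G(1) ru] G(2) by simp
  have hv: "vins (h *\<^sub>v x) = g *\<^sub>v vins x" if "x \<in> carrier_vec (d-1)" for x
    unfolding h_def using rowunit_ins[OF G(1) ru that] by simp
  have pres: "Q' (h *\<^sub>v x) (h *\<^sub>v y) = Q' x y" if x: "x \<in> carrier_vec (d-1)" and y: "y \<in> carrier_vec (d-1)" for x y
  proof -
    have "Q' (h *\<^sub>v x) (h *\<^sub>v y) = Q (vins (h *\<^sub>v x)) (vins (h *\<^sub>v y))"
      using Q_red_ins[of "h *\<^sub>v x" "h *\<^sub>v y"] hc x y by simp
    also have "\<dots> = Q (g *\<^sub>v vins x) (g *\<^sub>v vins y)" using hv x y by simp
    also have "\<dots> = Q (vins x) (vins y)" using G(4) by simp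
    also have "\<dots> = Q' x y" using Q_red_ins x y by simp
    finally show ?thesis .
  qed
  have kern: "h *\<^sub>v v = v" if v: "v \<in> form_kernel (d-1) \<alpha>" for v
  proof -
    have vc: "v \<in> carrier_vec (d-1)" and vk: "\<And>y. y \<in> carrier_vec (d-1) \<Longrightarrow> Q' v y = 0"
      using v unfolding form_kernel_def by auto
    have "vins v \<in> {y \<in> carrier_vec d. \<forall>h \<in> carrier_vec d. h $ p = 0 \<longrightarrow> Q y h = 0}"
    proof (safe)
      show "vins v \<in> carrier_vec d" by simp
      fix k :: "complex vec" assume k: "k \<in> carrier_vec d" "k $ p = 0"
      have "Q (vins v) k = Q' (vdel (vins v)) (vdel k)" using Q_red[of "vins v" k] k by simp
      also have "\<dots> = Q' v (vdel k)" using vdel_vins[OF vc] by simp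
      also have "\<dots> = 0" using vk[OF vdel_carrier] .
      finally show "Q (vins v) k = 0" .
    qed
    then obtain c where c: "vins v = c \<cdot>\<^sub>v w" using hwspan by auto
    have "vins (h *\<^sub>v v) = vins v" using hv[OF vc] c G(1) G(3) hw by (simp add: mult_mat_vec)
    then have "vdel (vins (h *\<^sub>v v)) = vdel (vins v)" by simp
    then show ?thesis using vdel_vins[OF vc] vdel_vins[of "h *\<^sub>v v"] hc vc by simp
  qed
  show ?thesis unfolding h_def[symmetric] SU_star_def SU_Q_def preserves_form_def
    using hc hdet pres kern by auto
qed

end


lemma inv_smult_one: "(c::complex) \<noteq> 0 \<Longrightarrow> inverse c \<cdot>\<^sub>m (c \<cdot>\<^sub>m 1\<^sub>m n) = 1\<^sub>m n"
  by (intro eq_matI) auto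

context mt begin

lemma Lop_carrier[simp]: "Lop n \<alpha> q \<in> carrier_mat n n" unfolding Lop_def by simp
lemma Lop_dims[simp]: "dim_row (Lop n \<alpha> q) = n" "dim_col (Lop n \<alpha> q) = n" unfolding Lop_def by simp_all

lemma md_index:
  assumes "A \<in> carrier_mat d d" "i < d - 1" "j < d - 1"
  shows "mat_delete A p p $$ (i,j) = A $$ (insert_index p i, insert_index p j)"
  using assms unfolding mat_delete_def insert_index_def by simp

lemma Lop_entry:
  assumes "i < n" "j < n"
  shows "Lop n \<alpha> q $$ (i,j) = (if i = j then 1 else 0) - (if i = q then (1 + z) * Qgram \<alpha> j q else 0)"
  using assms gram_scaled[of j q] unfolding Lop_def zeta_def[symmetric]
  by (auto simp: algebra_simps)


lemma Lop_vec:
  assumes q: "q < n" and x: "x \<in> carrier_vec n"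
  shows "Lop n \<alpha> q *\<^sub>v x = x - ((1 + z) * Qform n \<alpha> x (unit_vec n q)) \<cdot>\<^sub>v unit_vec n q"
proof (rule eq_vecI)
  fix i assume "i < dim_vec (x - ((1 + z) * Qform n \<alpha> x (unit_vec n q)) \<cdot>\<^sub>v unit_vec n q)"
  then have i: "i < n" by simp
  have "(Lop n \<alpha> q *\<^sub>v x) $ i = (\<Sum>j<n. Lop n \<alpha> q $$ (i,j) * x $ j)"
    using i x by (simp add: row_def scalar_prod_def atLeast0LessThan)
  also have "\<dots> = (\<Sum>j<n. (if i = j then x $ j else 0) - (if i = q then (1 + z) * (x $ j * Qgram \<alpha> j q) else 0))"
    by (intro sum.cong) (auto simp: Lop_entry i algebra_simps)
  also have "\<dots> = x $ i - (if i = q then (1 + z) * Qform n \<alpha> x (unit_vec n q) else 0)"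
    using i unfolding sum_subtractf Qform_unit2[OF q] by (simp add: sum_distrib_left)
  also have "\<dots> = (x - ((1 + z) * Qform n \<alpha> x (unit_vec n q)) \<cdot>\<^sub>v unit_vec n q) $ i"
    using i x by (simp add: unit_vec_def)
  finally show "(Lop n \<alpha> q *\<^sub>v x) $ i = (x - ((1 + z) * Qform n \<alpha> x (unit_vec n q)) \<cdot>\<^sub>v unit_vec n q) $ i" .
qed (insert x, simp add: Lop_def)

lemma Qee_gen: "q < n \<Longrightarrow> Qform n \<alpha> (unit_vec n q) (unit_vec n q) = 1"
proof -
  assume q: "q < n"
  have "Qform n \<alpha> (unit_vec n q) (unit_vec n q) = (\<Sum>j<n. cnj (unit_vec n q $ j) * Qgram \<alpha> q j)" by (rule Qform_unit1[OF q])
  also have "\<dots> = (\<Sum>j<n. if j = q then 1 else 0)" by (intro sum.cong) (auto simp: unit_vec_def)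
  also have "\<dots> = 1" using q by simp
  finally show ?thesis .
qed

lemma Lop_pres:
  assumes q: "q < n" and x: "x \<in> carrier_vec n" and y: "y \<in> carrier_vec n"
  shows "Qform n \<alpha> (Lop n \<alpha> q *\<^sub>v x) (Lop n \<alpha> q *\<^sub>v y) = Qform n \<alpha> x y"
proof -
  define E where "E = (unit_vec n q :: complex vec)"
  define a where "a = 1 + z"
  define u where "u = Qform n \<alpha> x E"
  define v where "v = Qform n \<alpha> y E"
  have Ec: "E \<in> carrier_vec n" unfolding E_def by simp
  have EE: "Qform n \<alpha> E E = 1" unfolding E_def using Qee_gen[OF q] .
  have Ey: "Qform n \<alpha> E y = cnj v" unfolding v_def using Qform_herm by metis
  have a0: "a + cnj a - a * cnj a = 0" unfolding a_def using z_cnj by (simp add: algebra_simps)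
  have "Qform n \<alpha> (Lop n \<alpha> q *\<^sub>v x) (Lop n \<alpha> q *\<^sub>v y) = Qform n \<alpha> (x - (a * u) \<cdot>\<^sub>v E) (y - (a * v) \<cdot>\<^sub>v E)"
    unfolding Lop_vec[OF q x] Lop_vec[OF q y] a_def u_def v_def E_def ..
  also have "\<dots> = Qform n \<alpha> x y - cnj (a * v) * u - a * u * Qform n \<alpha> E y + a * u * cnj (a * v) * Qform n \<alpha> E E"
    using x y Ec unfolding u_def by (simp add: Qform_diff1 Qform_diff2 Qform_smult1 Qform_smult2 algebra_simps)
  also have "\<dots> = Qform n \<alpha> x y - u * cnj v * (a + cnj a - a * cnj a)"
    unfolding Ey EE by (simp add: algebra_simps)
  also have "\<dots> = Qform n \<alpha> x y" using a0 by simp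
  finally show ?thesis .
qed

lemma Lop_w: assumes "q < d" "q \<noteq> p" shows "Lop d \<alpha> q *\<^sub>v w = w"
proof -
  have "Q w (e q) = 0" using Qwh[of "e q"] assms hp by simp
  then show ?thesis using Lop_vec[OF assms(1) hw] hw by (auto intro!: eq_vecI)
qed

lemma Lop_rowunit: "q \<noteq> p \<Longrightarrow> rowunit (Lop d \<alpha> q)"
  unfolding rowunit_def Lop_def using hp by auto

lemma Lop_restr:
  assumes "q < d - 1"
  shows "mat_delete (Lop d \<alpha> (insert_index p q)) p p = Lop (d-1) \<alpha> q"
proof (rule eq_matI)
  fix i j assume "i < dim_row (Lop (d - 1) \<alpha> q)" "j < dim_col (Lop (d - 1) \<alpha> q)"
  then have i: "i < d - 1" and j: "j < d - 1" by (auto simp: Lop_def)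
  have ii: "insert_index p i < d" "insert_index p j < d" using ins_lt i j by auto
  have eqs: "(insert_index p i = insert_index p j) = (i = j)" "(insert_index p j = insert_index p q) = (j = q)"
    "(insert_index p i = insert_index p q) = (i = q)" "(insert_index p q < insert_index p j) = (q < j)"
    unfolding insert_index_def by auto
  have "mat_delete (Lop d \<alpha> (insert_index p q)) p p $$ (i,j) = Lop d \<alpha> (insert_index p q) $$ (insert_index p i, insert_index p j)"
    unfolding mat_delete_def using i j hp by (simp add: Lop_def insert_index_def)
  also have "\<dots> = Lop (d-1) \<alpha> q $$ (i,j)"
    using ii i j unfolding Lop_def by (simp add: eqs)
  finally show "mat_delete (Lop d \<alpha> (insert_index p q)) p p $$ (i,j) = Lop (d-1) \<alpha> q $$ (i,j)" .
qed (auto simp: Lop_def mat_delete_def)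

abbreviation "Gam \<equiv> gen_group d (Lop d \<alpha> ` ({..<d} - {p}))"
abbreviation "Gam' \<equiv> gen_group (d-1) (Lop (d-1) \<alpha> ` {..<d-1})"
abbreviation "S \<equiv> Gam \<inter> SU_Q d \<alpha>"

lemma Gam_props:
  assumes "g \<in> Gam"
  shows "g \<in> carrier_mat d d \<and> g *\<^sub>v w = w \<and>
    (\<forall>x \<in> carrier_vec d. \<forall>y \<in> carrier_vec d. Q (g *\<^sub>v x) (g *\<^sub>v y) = Q x y)"
  using assms
proof (induction g rule: gen_group.induct)
  case gen_one then show ?case using hw by simp
next
  case (gen_gen s)
  then obtain q where q: "q < d" "q \<noteq> p" "s = Lop d \<alpha> q" by auto
  then show ?case using Lop_w Lop_pres by simp
next
  case (gen_mult g h)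
  then have gc: "g \<in> carrier_mat d d" and hc: "h \<in> carrier_mat d d" by auto
  have "g * h *\<^sub>v w = w" using assoc_mult_mat_vec[OF gc hc hw] gen_mult by simp
  moreover have "Q (g * h *\<^sub>v x) (g * h *\<^sub>v y) = Q x y" if "x \<in> carrier_vec d" "y \<in> carrier_vec d" for x y
    using assoc_mult_mat_vec[OF gc hc that(1)] assoc_mult_mat_vec[OF gc hc that(2)] gen_mult that hc by simp
  ultimately show ?case using gc hc by simp
next
  case (gen_inv g h)
  have gc: "g \<in> carrier_mat d d" using gen_inv by simp
  have hc: "h \<in> carrier_mat d d" using gen_inv by simp
  have hw': "h *\<^sub>v w = w"
  proof -
    have "h *\<^sub>v w = h *\<^sub>v (g *\<^sub>v w)" using gen_inv by simp
    also have "\<dots> = (h * g) *\<^sub>v w" using assoc_mult_mat_vec[OF hc gc hw] by simp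
    finally show ?thesis using gen_inv hw by simp
  qed
  have "Q (h *\<^sub>v x) (h *\<^sub>v y) = Q x y" if "x \<in> carrier_vec d" "y \<in> carrier_vec d" for x y
  proof -
    have "Q (h *\<^sub>v x) (h *\<^sub>v y) = Q (g *\<^sub>v (h *\<^sub>v x)) (g *\<^sub>v (h *\<^sub>v y))" using gen_inv that by simp
    also have "\<dots> = Q x y" using gen_inv that assoc_mult_mat_vec[OF gc hc that(1)] assoc_mult_mat_vec[OF gc hc that(2)] by simp
    finally show ?thesis .
  qed
  then show ?case using gen_inv hw' by simp
qed

lemma S_Tset: "g \<in> S \<Longrightarrow> g \<in> Tset"
  using Gam_props unfolding Tset_def by auto

lemma S_mult: "g \<in> S \<Longrightarrow> h \<in> S \<Longrightarrow> g * h \<in> S"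
  using Tset_mult[OF S_Tset S_Tset] gen_mult unfolding Tset_def by auto

lemma S_adj: assumes "g \<in> S" shows "adj_mat g \<in> S"
proof -
  note A = Tset_adj[OF S_Tset[OF assms]]
  have "adj_mat g \<in> Gam"
    using gen_inv[of g d _ "adj_mat g"] assms A TsetD(1)[OF A(1)] by auto
  then show ?thesis using A(1) unfolding Tset_def by auto
qed

lemma md_mult:
  assumes G: "G \<in> carrier_mat d d" and H: "H \<in> carrier_mat d d" and r: "rowunit H"
  shows "mat_delete (G * H) p p = mat_delete G p p * mat_delete H p p"
proof (rule eq_matI)
  fix i j assume "i < dim_row (mat_delete G p p * mat_delete H p p)" "j < dim_col (mat_delete G p p * mat_delete H p p)"
  then have i: "i < d - 1" and j: "j < d - 1" using G H by auto
  have GHc: "G * H \<in> carrier_mat d d" using G H by simp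
  have "mat_delete (G * H) p p $$ (i,j) = (G * H) $$ (insert_index p i, insert_index p j)"
    by (rule md_index[OF GHc i j])
  also have "\<dots> = (\<Sum>k<d. G $$ (insert_index p i, k) * H $$ (k, insert_index p j))"
    using G H i j ins_lt[OF i] ins_lt[OF j]
    by (simp add: row_def col_def scalar_prod_def atLeast0LessThan)
  also have "\<dots> = G $$ (insert_index p i, p) * H $$ (p, insert_index p j) +
      (\<Sum>k<d-1. G $$ (insert_index p i, insert_index p k) * H $$ (insert_index p k, insert_index p j))"
    by (rule sum_split_ins[OF hp])
  also have "H $$ (p, insert_index p j) = 0" using r ins_lt[OF j] unfolding rowunit_def by simp
  also have "(\<Sum>k<d-1. G $$ (insert_index p i, insert_index p k) * H $$ (insert_index p k, insert_index p j))
      = (mat_delete G p p * mat_delete H p p) $$ (i,j)"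
    using G H i j md_index[OF G i] md_index[OF H _ j] mat_delete_carrier[OF G, of p p] mat_delete_carrier[OF H, of p p]
    by (simp add: row_def col_def scalar_prod_def atLeast0LessThan)
  finally show "mat_delete (G * H) p p $$ (i,j) = (mat_delete G p p * mat_delete H p p) $$ (i,j)" by simp
qed (insert G H, auto)

lemma rowunit_mult:
  assumes G: "G \<in> carrier_mat d d" and H: "H \<in> carrier_mat d d" and rG: "rowunit G"
  shows "rowunit (G * H) \<longleftrightarrow> rowunit H"
proof -
  have "(G * H) $$ (p,j) = H $$ (p,j)" if j: "j < d" for j
  proof -
    have "(G * H) $$ (p,j) = (\<Sum>k<d. G $$ (p,k) * H $$ (k,j))"
      using G H j hp by (simp add: row_def col_def scalar_prod_def atLeast0LessThan)
    also have "\<dots> = (\<Sum>k<d. if k = p then H $$ (k,j) else 0)"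
      using rG unfolding rowunit_def by (intro sum.cong) auto
    finally show ?thesis using hp by simp
  qed
  then show ?thesis unfolding rowunit_def by auto
qed

lemma md_one: "mat_delete (1\<^sub>m d) p p = 1\<^sub>m (d-1)"
  unfolding mat_delete_def using ins_lt by (intro eq_matI) (auto simp: insert_index_def)

lemma rowunit_one: "rowunit (1\<^sub>m d)" unfolding rowunit_def using hp by auto

lemma lift:
  assumes "g \<in> Gam'"
  shows "\<exists>G \<in> Gam. rowunit G \<and> mat_delete G p p = g"
  using assms
proof (induction g rule: gen_group.induct)
  case gen_one
  show ?case using md_one rowunit_one gen_group.gen_one by blast
next
  case (gen_gen s)
  then obtain q where q: "q < d - 1" "s = Lop (d-1) \<alpha> q" by auto
  have "Lop d \<alpha> (insert_index p q) \<in> Gam"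
    using ins_lt[OF q(1)] ins_ne by (intro gen_group.gen_gen) auto
  then show ?case using Lop_restr[OF q(1)] Lop_rowunit[OF ins_ne] q(2) by blast
next
  case (gen_mult g h)
  then obtain G H where GH: "G \<in> Gam" "rowunit G" "mat_delete G p p = g" "H \<in> Gam" "rowunit H" "mat_delete H p p = h"
    by blast
  have Gc: "G \<in> carrier_mat d d" and Hc: "H \<in> carrier_mat d d" using Gam_props GH by auto
  have "G * H \<in> Gam" using GH by (intro gen_group.gen_mult)
  moreover have "rowunit (G * H)" using rowunit_mult[OF Gc Hc GH(2)] GH(5) by simp
  moreover have "mat_delete (G * H) p p = g * h" using md_mult[OF Gc Hc GH(5)] GH by simp
  ultimately show ?case by blast
next
  case (gen_inv g h)
  then obtain G where G: "G \<in> Gam" "rowunit G" "mat_delete G p p = g" by blast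
  have Gc: "G \<in> carrier_mat d d" using Gam_props G by auto
  have gc: "g \<in> carrier_mat (d-1) (d-1)" using G(3) mat_delete_carrier[OF Gc, of p p] by simp
  note hc = gen_inv.hyps(2) and gh = gen_inv.hyps(3) and hg = gen_inv.hyps(4)
  have "det g * det h = 1" using det_mult[OF gc hc] gh by simp
  then have dg: "det g \<noteq> 0" by auto
  have dG: "det G = det g" using rowunit_det[OF Gc G(2)] G(3) by simp
  define H where "H = inverse (det G) \<cdot>\<^sub>m adj_mat G"
  have Hc: "H \<in> carrier_mat d d" unfolding H_def using adj_mat[OF Gc] by simp
  have GH: "G * H = 1\<^sub>m d" unfolding H_def using adj_mat[OF Gc] dg dG Gc
    by (simp add: mult_smult_distrib[of _ d d] inv_smult_one)
  have HG: "H * G = 1\<^sub>m d" unfolding H_def using adj_mat[OF Gc] dg dG Gc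
    by (simp add: mult_smult_assoc_mat[of _ d d] inv_smult_one)
  have HGam: "H \<in> Gam" using gen_group.gen_inv[OF G(1) Hc GH HG] .
  have rH: "rowunit H" using rowunit_mult[OF Gc Hc G(2)] GH rowunit_one by simp
  have "g * mat_delete H p p = mat_delete (G * H) p p" using md_mult[OF Gc Hc rH] G(3) by simp
  then have "g * mat_delete H p p = 1\<^sub>m (d-1)" using GH md_one by simp
  then have "h * (g * mat_delete H p p) = h" using hc by simp
  then have "(h * g) * mat_delete H p p = h"
    using assoc_mult_mat[OF hc gc mat_delete_carrier[OF Hc, of p p]] by simp
  then have "mat_delete H p p = h" using hg left_mult_one_mat[OF mat_delete_carrier[OF Hc, of p p]] by simp
  then show ?case using HGam rH by blast
qed

lemma lift_S:
  assumes "g \<in> Gam' \<inter> SL_mat (d-1)"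
  shows "\<exists>G \<in> S. mat_delete G p p = g"
proof -
  obtain G where G: "G \<in> Gam" "rowunit G" "mat_delete G p p = g" using lift assms by blast
  have P: "G \<in> carrier_mat d d" "G *\<^sub>v w = w" "\<And>x y. x \<in> carrier_vec d \<Longrightarrow> y \<in> carrier_vec d \<Longrightarrow> Q (G *\<^sub>v x) (G *\<^sub>v y) = Q x y"
    using Gam_props[OF G(1)] by auto
  have "det G = 1" using rowunit_det[OF P(1) G(2)] G(3) assms unfolding SL_mat_def by simp
  then have "G \<in> SU_Q d \<alpha>" using P unfolding SU_Q_def preserves_form_def by auto
  then show ?thesis using G by blast
qed

end


context mt begin

lemma vdel_dim[simp]: "dim_vec (vdel x) = d - 1" unfolding vdel_def by simp
lemma vdel_index'[simp]: "i < d - Suc 0 \<Longrightarrow> vdel x $ i = x $ insert_index p i" unfolding vdel_def by simp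

definition Emb :: "complex mat \<Rightarrow> complex mat" where
  "Emb B = mat d d (\<lambda>(i,j). if i = p \<and> j = p then 1 else if i = p \<or> j = p then 0
      else B $$ (delete_index p i, delete_index p j))"

lemma Emb_carrier[simp]: "Emb B \<in> carrier_mat d d" unfolding Emb_def by simp
lemma Emb_dims[simp]: "dim_row (Emb B) = d" "dim_col (Emb B) = d" unfolding Emb_def by simp_all

lemma vec_decomp: "x \<in> carrier_vec d \<Longrightarrow> x = vins (vdel x) + x $ p \<cdot>\<^sub>v e p"
proof (rule eq_vecI)
  fix i assume x: "x \<in> carrier_vec d" and "i < dim_vec (vins (vdel x) + x $ p \<cdot>\<^sub>v e p)"
  then have i: "i < d" by simp
  show "x $ i = (vins (vdel x) + x $ p \<cdot>\<^sub>v e p) $ i"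
    using i del_lt[of i] insert_delete_index[of i p] unfolding vins_def by (cases "i = p") (auto simp: unit_vec_def)
qed simp

lemma Emb_vec:
  assumes B: "B \<in> carrier_mat (d-1) (d-1)" and x: "x \<in> carrier_vec d"
  shows "Emb B *\<^sub>v x = vins (B *\<^sub>v vdel x) + x $ p \<cdot>\<^sub>v e p"
proof (rule eq_vecI)
  fix i assume "i < dim_vec (vins (B *\<^sub>v vdel x) + x $ p \<cdot>\<^sub>v e p)"
  then have i: "i < d" by simp
  have "(Emb B *\<^sub>v x) $ i = (\<Sum>j<d. Emb B $$ (i,j) * x $ j)"
    using i x by (simp add: row_def scalar_prod_def atLeast0LessThan)
  also have "\<dots> = Emb B $$ (i,p) * x $ p + (\<Sum>j<d-1. Emb B $$ (i, insert_index p j) * x $ insert_index p j)"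
    by (rule sum_split_ins[OF hp])
  also have "\<dots> = (vins (B *\<^sub>v vdel x) + x $ p \<cdot>\<^sub>v e p) $ i"
  proof (cases "i = p")
    case True
    then show ?thesis using i hp ins_lt unfolding Emb_def by simp
  next
    case False
    have di: "delete_index p i < d - 1" using del_lt[OF i False] .
    have "(\<Sum>j<d-1. Emb B $$ (i, insert_index p j) * x $ insert_index p j)
        = (\<Sum>j<d-1. B $$ (delete_index p i, j) * vdel x $ j)"
      using i False ins_lt unfolding Emb_def by (intro sum.cong) auto
    also have "\<dots> = (B *\<^sub>v vdel x) $ delete_index p i"
      using B di by (simp add: row_def scalar_prod_def atLeast0LessThan)
    finally show ?thesis using i False hp unfolding Emb_def vins_def by simp
  qed
  finally show "(Emb B *\<^sub>v x) $ i = (vins (B *\<^sub>v vdel x) + x $ p \<cdot>\<^sub>v e p) $ i" .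
qed (insert B x, auto)

lemma Emb_vins:
  assumes B: "B \<in> carrier_mat (d-1) (d-1)" and y: "y \<in> carrier_vec (d-1)"
  shows "Emb B *\<^sub>v vins y = vins (B *\<^sub>v y)"
proof -
  have "vins (B *\<^sub>v y) + 0 \<cdot>\<^sub>v e p = vins (B *\<^sub>v y)" by (intro eq_vecI) (auto simp: vins_def)
  then show ?thesis using Emb_vec[OF B vins_carrier[of y]] vdel_vins[OF y] by simp
qed

lemma md_Emb: "B \<in> carrier_mat (d-1) (d-1) \<Longrightarrow> mat_delete (Emb B) p p = B"
  unfolding mat_delete_def Emb_def
  by (intro eq_matI) (auto simp: insert_index_def ins_lt delete_index_def)

section \<open>The Gram matrix\<close>

definition Gm :: "complex mat" where "Gm = mat d d (\<lambda>(i,j). Qgram \<alpha> i j)"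

definition cvec :: "complex vec \<Rightarrow> complex vec" where "cvec y = vec (dim_vec y) (\<lambda>i. cnj (y $ i))"

lemma Gm_carrier[simp]: "Gm \<in> carrier_mat d d" unfolding Gm_def by simp
lemma Gm_dims[simp]: "dim_row Gm = d" "dim_col Gm = d" unfolding Gm_def by simp_all
lemma cvec_cvec: "cvec (cvec y) = y" unfolding cvec_def by (intro eq_vecI) auto
lemma cvec_carrier[simp]: "cvec y \<in> carrier_vec d \<longleftrightarrow> y \<in> carrier_vec d" unfolding cvec_def carrier_vec_def by simp

lemma hat_Gm: "y \<in> carrier_vec d \<Longrightarrow> hatv d \<alpha> y = Gm *\<^sub>v cvec y"
  unfolding hatv_def Gm_def cvec_def
  by (intro eq_vecI) (auto simp: row_def scalar_prod_def atLeast0LessThan mult.commute intro!: sum.cong)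

lemma Gm_det: "det Gm \<noteq> 0"
proof
  assume "det Gm = 0"
  then obtain v where v: "v \<in> carrier_vec d" "v \<noteq> 0\<^sub>v d" "Gm *\<^sub>v v = 0\<^sub>v d"
    using det_0_iff_vec_prod_zero[OF Gm_carrier] by blast
  define u where "u = cvec v"
  have uc: "u \<in> carrier_vec d" using v unfolding u_def cvec_def by simp
  have "Q u (e k) = 0" if k: "k < d" for k
  proof -
    have "Q (e k) u = (e k) \<bullet> hatv d \<alpha> u" using Qform_hat by simp
    also have "hatv d \<alpha> u = Gm *\<^sub>v v" using hat_Gm[OF uc] unfolding u_def cvec_cvec .
    finally have "Q (e k) u = 0" using v k by simp
    then show ?thesis using Qform_herm[of d \<alpha> u "e k"] by simp
  qed
  then have "u = 0\<^sub>v d" using nondeg uc by blast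
  then have "cvec u = 0\<^sub>v d" unfolding cvec_def by (intro eq_vecI) auto
  then have "v = 0\<^sub>v d" unfolding u_def cvec_cvec .
  then show False using v by simp
qed

definition Ginv :: "complex mat" where "Ginv = inverse (det Gm) \<cdot>\<^sub>m adj_mat Gm"

lemma Ginv_carrier[simp]: "Ginv \<in> carrier_mat d d" unfolding Ginv_def using adj_mat[OF Gm_carrier] by simp
lemma Ginv_dims[simp]: "dim_row Ginv = d" "dim_col Ginv = d" using Ginv_carrier unfolding carrier_mat_def by auto

lemma Gm_Ginv: "Gm * Ginv = 1\<^sub>m d"
  unfolding Ginv_def using adj_mat[OF Gm_carrier] Gm_det
  by (simp add: mult_smult_distrib[of _ d d] inv_smult_one)

section \<open>The lift\<close>

definition rvec :: "complex mat \<Rightarrow> complex vec" where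
  "rvec B = transpose_mat (Emb B) *\<^sub>v hatv d \<alpha> (e p)"

definition vv :: "complex mat \<Rightarrow> complex vec" where
  "vv B = cvec (Ginv *\<^sub>v rvec B)"

lemma rvec_carrier[simp]: "rvec B \<in> carrier_vec d" unfolding rvec_def carrier_vec_def by simp
lemma vv_carrier[simp]: "vv B \<in> carrier_vec d" unfolding vv_def cvec_def by simp

lemma hat_vv: "hatv d \<alpha> (vv B) = rvec B"
proof -
  have "hatv d \<alpha> (vv B) = Gm *\<^sub>v cvec (vv B)" by (rule hat_Gm[OF vv_carrier])
  also have "cvec (vv B) = Ginv *\<^sub>v rvec B" unfolding vv_def by (rule cvec_cvec)
  also have "Gm *\<^sub>v (Ginv *\<^sub>v rvec B) = (Gm * Ginv) *\<^sub>v rvec B" by (rule assoc_mult_mat_vec[OF Gm_carrier Ginv_carrier rvec_carrier, symmetric])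
  also have "\<dots> = rvec B" unfolding Gm_Ginv by simp
  finally show ?thesis .
qed

lemma vv_prop:
  assumes y: "y \<in> carrier_vec d"
  shows "Q (vv B) y = Q (e p) (Emb B *\<^sub>v y)"
proof -
  have "Q y (vv B) = y \<bullet> rvec B" unfolding Qform_hat[OF y] hat_vv ..
  also have "\<dots> = rvec B \<bullet> y" using comm_scalar_prod[OF y rvec_carrier] .
  also have "\<dots> = hatv d \<alpha> (e p) \<bullet> (Emb B *\<^sub>v y)" unfolding rvec_def
    using transpose_vec_mult_scalar[OF Emb_carrier y hatv_carrier] .
  also have "\<dots> = (Emb B *\<^sub>v y) \<bullet> hatv d \<alpha> (e p)"
    using comm_scalar_prod[OF hatv_carrier mult_mat_vec_carrier[OF Emb_carrier y]] .
  also have "\<dots> = Q (Emb B *\<^sub>v y) (e p)" by (rule Qform_hat[OF mult_mat_vec_carrier[OF Emb_carrier y], symmetric])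
  finally have "Q y (vv B) = Q (Emb B *\<^sub>v y) (e p)" .
  then show ?thesis using Qform_herm by metis
qed

definition nrm :: "complex mat \<Rightarrow> complex mat" where
  "nrm A = mat (d-1) (d-1) (\<lambda>(i,j). A $$ (i,j))"

lemma nrm_carrier[simp]: "nrm A \<in> carrier_mat (d-1) (d-1)" unfolding nrm_def by simp
lemma nrm_id: "A \<in> carrier_mat (d-1) (d-1) \<Longrightarrow> nrm A = A" unfolding nrm_def by (intro eq_matI) auto

definition ccoef :: "complex vec \<Rightarrow> complex" where
  "ccoef v = (1 - Q v v) * \<beta> / (2 * (\<beta> * cnj \<beta>))"

definition colv :: "complex mat \<Rightarrow> complex vec" where
  "colv h = vv (adj_mat h) - e p + ccoef (vv (adj_mat h)) \<cdot>\<^sub>v w"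

definition sig :: "complex mat \<Rightarrow> complex mat" where
  "sig A = Emb (nrm A) + outer (colv (nrm A)) (e p)"

lemma colv_carrier[simp]: "colv h \<in> carrier_vec d" unfolding colv_def using hw by simp
lemma colv_dim[simp]: "dim_vec (colv h) = d" using colv_carrier[of h] unfolding carrier_vec_def by simp

lemma sig_carrier[simp]: "sig A \<in> carrier_mat d d" unfolding sig_def by simp
lemma sig_dims[simp]: "dim_row (sig A) = d" "dim_col (sig A) = d" using sig_carrier[of A] unfolding carrier_mat_def by auto

lemma sig_vec:
  assumes h: "h \<in> carrier_mat (d-1) (d-1)" and x: "x \<in> carrier_vec d"
  shows "sig h *\<^sub>v x = vins (h *\<^sub>v vdel x) + x $ p \<cdot>\<^sub>v (vv (adj_mat h) + ccoef (vv (adj_mat h)) \<cdot>\<^sub>v w)"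
proof -
  have "sig h *\<^sub>v x = Emb h *\<^sub>v x + outer (colv h) (e p) *\<^sub>v x"
    unfolding sig_def nrm_id[OF h] using x by (simp add: add_mult_distrib_mat_vec[of _ d d])
  also have "outer (colv h) (e p) *\<^sub>v x = x $ p \<cdot>\<^sub>v colv h"
    using outer_mult_vec[OF colv_carrier[of h] unit_vec_carrier x] x hp by simp
  finally show ?thesis unfolding Emb_vec[OF h x] colv_def using hw hp
    by (intro eq_vecI) (auto simp: algebra_simps)
qed

lemma Qcoef:
  assumes "Q v w = \<beta>" and that: "v \<in> carrier_vec d"
  shows "Q (v + ccoef v \<cdot>\<^sub>v w) (v + ccoef v \<cdot>\<^sub>v w) = 1"
proof -
  define c where "c = ccoef v"
  define N where "N = Q v v"
  have NR: "cnj N = N" unfolding N_def using Qform_herm[of d \<alpha> v v] by simp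
  have bb: "\<beta> * cnj \<beta> \<noteq> 0" using beta_ne0 by simp
  have cb: "c * cnj \<beta> = (1 - N) / 2" unfolding c_def ccoef_def N_def[symmetric] using bb
    by (simp add: field_simps)
  have cb': "cnj c * \<beta> = (1 - N) / 2" using arg_cong[OF cb, of cnj] NR by simp
  have Qwv: "Q w v = cnj \<beta>" using Qform_herm[of d \<alpha> w v] assms by simp
  have "Q (v + c \<cdot>\<^sub>v w) (v + c \<cdot>\<^sub>v w) = N + cnj c * Q v w + c * Q w v + c * cnj c * Q w w"
    unfolding N_def using that hw by (simp add: Qform_add1 Qform_add2 Qform_smult1 Qform_smult2 algebra_simps)
  also have "\<dots> = N + cnj c * \<beta> + c * cnj \<beta>" using assms Qwv Qww by simp
  also have "\<dots> = 1" unfolding cb cb' by (simp add: field_simps)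
  finally show ?thesis unfolding c_def .
qed

lemma sig_props:
  assumes hS: "h \<in> SU_star (d-1) \<alpha>"
  shows "sig h \<in> Tset" "mat_delete (sig h) p p = h" "rowunit (sig h)"
proof -
  have hc: "h \<in> carrier_mat (d-1) (d-1)" and hdet: "det h = 1"
    and hpres: "\<And>x y. x \<in> carrier_vec (d-1) \<Longrightarrow> y \<in> carrier_vec (d-1) \<Longrightarrow> Q' (h *\<^sub>v x) (h *\<^sub>v y) = Q' x y"
    and hker: "\<And>v. v \<in> form_kernel (d-1) \<alpha> \<Longrightarrow> h *\<^sub>v v = v"
    using hS unfolding SU_star_def SU_Q_def preserves_form_def by auto
  note A = adj_inv[OF hc hdet]
  define hi where "hi = adj_mat h"
  have hic: "hi \<in> carrier_mat (d-1) (d-1)" unfolding hi_def using A by simp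
  define kw where "kw = vdel w"
  have kwc: "kw \<in> carrier_vec (d-1)" unfolding kw_def by simp
  have wkw: "vins kw = w" unfolding kw_def using vins_vdel[OF hw wp0] .
  have kwk: "kw \<in> form_kernel (d-1) \<alpha>" unfolding form_kernel_def
  proof (safe)
    show "kw \<in> carrier_vec (d-1)" by fact
    fix y :: "complex vec" assume y: "y \<in> carrier_vec (d-1)"
    have "Q' kw y = Q (vins kw) (vins y)" using Q_red_ins[OF kwc y] by simp
    also have "\<dots> = 0" unfolding wkw by (rule Qwh) simp_all
    finally show "Q' kw y = 0" .
  qed
  have hkw: "h *\<^sub>v kw = kw" using hker[OF kwk] .
  have hikw: "hi *\<^sub>v kw = kw"
  proof -
    have "hi *\<^sub>v kw = hi *\<^sub>v (h *\<^sub>v kw)" using hkw by simp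
    also have "\<dots> = (hi * h) *\<^sub>v kw" using assoc_mult_mat_vec[OF hic hc kwc] by simp
    finally show ?thesis unfolding hi_def using A kwc by simp
  qed
  define v where "v = vv hi"
  have vc: "v \<in> carrier_vec d" unfolding v_def by simp
  have vprop: "Q v y = Q (e p) (Emb hi *\<^sub>v y)" if "y \<in> carrier_vec d" for y
    unfolding v_def using vv_prop[OF that] .
  have Qvins: "Q v (vins y) = Q (e p) (vins (hi *\<^sub>v y))" if "y \<in> carrier_vec (d-1)" for y
    using vprop[of "vins y"] Emb_vins[OF hic that] by simp
  have Qvw: "Q v w = \<beta>"
    using Qvins[OF kwc] hikw wkw unfolding \<beta>_def by simp
  have vp: "v $ p = 1" using Qxw[OF vc] Qvw beta_ne0 by simp
  define u where "u = v + ccoef v \<cdot>\<^sub>v w"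
  have uc: "u \<in> carrier_vec d" unfolding u_def using vc hw by simp
  have up: "u $ p = 1" unfolding u_def using vp wp0 vc hw hp by simp
  have Quu: "Q u u = 1" unfolding u_def using Qcoef[OF Qvw vc] .
  have sv: "sig h *\<^sub>v x = vins (h *\<^sub>v vdel x) + x $ p \<cdot>\<^sub>v u" if "x \<in> carrier_vec d" for x
    using sig_vec[OF hc that] unfolding u_def v_def hi_def .
  have Qu_ins: "Q u (vins (h *\<^sub>v y)) = Q (e p) (vins y)" if y: "y \<in> carrier_vec (d-1)" for y
  proof -
    have hy: "h *\<^sub>v y \<in> carrier_vec (d-1)" using hc y by simp
    have "Q u (vins (h *\<^sub>v y)) = Q v (vins (h *\<^sub>v y)) + ccoef v * Q w (vins (h *\<^sub>v y))"
      unfolding u_def using vc hw by (simp add: Qform_add1 Qform_smult1)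
    also have "Q w (vins (h *\<^sub>v y)) = 0" by (rule Qwh) simp_all
    also have "Q v (vins (h *\<^sub>v y)) = Q (e p) (vins (hi *\<^sub>v (h *\<^sub>v y)))" using Qvins[OF hy] .
    also have "hi *\<^sub>v (h *\<^sub>v y) = y" using assoc_mult_mat_vec[OF hic hc y, symmetric] A y unfolding hi_def by simp
    finally show ?thesis by simp
  qed
  have "w + 0 \<cdot>\<^sub>v u = w" using hw uc by (intro eq_vecI) auto
  then have sw: "sig h *\<^sub>v w = w" using sv[OF hw] hkw wp0 wkw unfolding kw_def by simp
  have pres: "Q (sig h *\<^sub>v x) (sig h *\<^sub>v y) = Q x y" if x: "x \<in> carrier_vec d" and y: "y \<in> carrier_vec d" for x y
  proof -
    define x' where "x' = vdel x"
    define y' where "y' = vdel y"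
    have x'c: "x' \<in> carrier_vec (d-1)" and y'c: "y' \<in> carrier_vec (d-1)" unfolding x'_def y'_def by simp_all
    have hx: "h *\<^sub>v x' \<in> carrier_vec (d-1)" and hy: "h *\<^sub>v y' \<in> carrier_vec (d-1)" using hc x'c y'c by simp_all
    have xd: "x = vins x' + x $ p \<cdot>\<^sub>v e p" and yd: "y = vins y' + y $ p \<cdot>\<^sub>v e p"
      unfolding x'_def y'_def using vec_decomp x y by auto
    have t1: "Q (vins (h *\<^sub>v x')) (vins (h *\<^sub>v y')) = Q (vins x') (vins y')"
      using Q_red_ins[OF hx hy] Q_red_ins[OF x'c y'c] hpres[OF x'c y'c] by simp
    have t3: "Q u (vins (h *\<^sub>v y')) = Q (e p) (vins y')" using Qu_ins[OF y'c] .
    have t2: "Q (vins (h *\<^sub>v x')) u = Q (vins x') (e p)"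
      using Qu_ins[OF x'c] Qform_herm[of d \<alpha> "vins (h *\<^sub>v x')" u] Qform_herm[of d \<alpha> "vins x'" "e p"] by simp
    have "Q (sig h *\<^sub>v x) (sig h *\<^sub>v y) = Q (vins (h *\<^sub>v x') + x $ p \<cdot>\<^sub>v u) (vins (h *\<^sub>v y') + y $ p \<cdot>\<^sub>v u)"
      unfolding sv[OF x] sv[OF y] x'_def y'_def ..
    also have "\<dots> = Q (vins (h *\<^sub>v x')) (vins (h *\<^sub>v y')) + cnj (y $ p) * Q (vins (h *\<^sub>v x')) u
        + x $ p * Q u (vins (h *\<^sub>v y')) + x $ p * cnj (y $ p) * Q u u"
      using uc by (simp add: Qform_add1 Qform_add2 Qform_smult1 Qform_smult2 algebra_simps)
    also have "\<dots> = Q (vins x') (vins y') + cnj (y $ p) * Q (vins x') (e p)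
        + x $ p * Q (e p) (vins y') + x $ p * cnj (y $ p) * Q (e p) (e p)"
      unfolding t1 t2 t3 Quu Qee by simp
    also have "\<dots> = Q (vins x' + x $ p \<cdot>\<^sub>v e p) (vins y' + y $ p \<cdot>\<^sub>v e p)"
      by (simp add: Qform_add1 Qform_add2 Qform_smult1 Qform_smult2 algebra_simps)
    finally show "Q (sig h *\<^sub>v x) (sig h *\<^sub>v y) = Q x y" using xd yd by simp
  qed
  show ru: "rowunit (sig h)" by (rule fix_p_rowunit[OF sig_carrier sw pres])
  show md: "mat_delete (sig h) p p = h"
  proof -
    have "mat_delete (sig h) p p = mat_delete (Emb h) p p"
    proof (rule eq_matI)
      fix i j assume "i < dim_row (mat_delete (Emb h) p p)" "j < dim_col (mat_delete (Emb h) p p)"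
      then have i: "i < d - 1" and j: "j < d - 1" by auto
      have "mat_delete (sig h) p p $$ (i,j) = sig h $$ (insert_index p i, insert_index p j)"
        by (rule md_index[OF sig_carrier i j])
      also have "\<dots> = Emb h $$ (insert_index p i, insert_index p j)"
        unfolding sig_def nrm_id[OF hc] outer_def using ins_lt[OF i] ins_lt[OF j] ins_ne
        by (simp add: unit_vec_def)
      also have "\<dots> = mat_delete (Emb h) p p $$ (i,j)" by (rule md_index[OF Emb_carrier i j, symmetric])
      finally show "mat_delete (sig h) p p $$ (i,j) = mat_delete (Emb h) p p $$ (i,j)" .
    qed auto
    then show ?thesis using md_Emb[OF hc] by simp
  qed
  show "sig h \<in> Tset"
  proof (rule TsetI)
    show "sig h \<in> carrier_mat d d" by simp
    show "det (sig h) = 1" using rowunit_det[OF sig_carrier ru] md hdet by simp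
    show "sig h *\<^sub>v w = w" by (rule sw)
  qed (rule pres)
qed

end


definition pm :: "nat \<Rightarrow> nat \<Rightarrow> (complex mat \<Rightarrow> complex mat) \<Rightarrow> bool" where
  "pm n k M \<longleftrightarrow> (\<forall>A. M A \<in> carrier_mat k k) \<and> (\<forall>i<k. \<forall>j<k. cpoly n (\<lambda>A. M A $$ (i,j)))"

lemma pmD: "pm n k M \<Longrightarrow> M A \<in> carrier_mat k k" "pm n k M \<Longrightarrow> i < k \<Longrightarrow> j < k \<Longrightarrow> cpoly n (\<lambda>A. M A $$ (i,j))"
  unfolding pm_def by auto

lemma pm_const: "C \<in> carrier_mat k k \<Longrightarrow> pm n k (\<lambda>A. C)"
  unfolding pm_def by auto

lemma pm_mult:
  assumes "pm n k M" "pm n k N"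
  shows "pm n k (\<lambda>A. M A * N A)"
  unfolding pm_def
proof (intro conjI allI impI)
  fix A show "M A * N A \<in> carrier_mat k k" using mult_carrier_mat[OF pmD(1)[OF assms(1)] pmD(1)[OF assms(2)]] .
next
  fix i j assume ij: "i < k" "j < k"
  have "(M A * N A) $$ (i,j) = (\<Sum>l\<in>{0..<k}. M A $$ (i,l) * N A $$ (l,j))" for A
    using carrier_matD[OF pmD(1)[OF assms(1), of A]] carrier_matD[OF pmD(1)[OF assms(2), of A]] ij
    by (simp add: row_def col_def scalar_prod_def)
  then have "(\<lambda>A. (M A * N A) $$ (i,j)) = (\<lambda>A. \<Sum>l\<in>{0..<k}. M A $$ (i,l) * N A $$ (l,j))"
    by (intro ext)
  moreover have "cpoly n (\<lambda>A. \<Sum>l\<in>{0..<k}. M A $$ (i,l) * N A $$ (l,j))"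
    using pmD(2)[OF assms(1)] pmD(2)[OF assms(2)] ij by (intro cpoly_sum cpoly_mult) auto
  ultimately show "cpoly n (\<lambda>A. (M A * N A) $$ (i,j))" by simp
qed

lemma pm_adj:
  assumes "pm n k M"
  shows "pm n k (\<lambda>A. adj_mat (M A))"
  unfolding pm_def
proof (intro conjI allI impI)
  fix A show "adj_mat (M A) \<in> carrier_mat k k" using adj_mat(1)[OF pmD(1)[OF assms]] .
next
  fix i j assume "i < k" "j < k"
  then show "cpoly n (\<lambda>A. adj_mat (M A) $$ (i,j))"
    using cpoly_adj[of M k n i j] pmD[OF assms] by blast
qed

lemma rp_pm: "f \<in> real_poly_fun k \<Longrightarrow> pm n k M \<Longrightarrow> (\<lambda>A. f (M A)) \<in> real_poly_fun n"
  using rp_comp pmD(2) by blast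

context mt begin

lemma hatv_dim[simp]: "dim_vec (hatv n a y) = n" unfolding hatv_def by simp
lemma rvec_dim[simp]: "dim_vec (rvec B) = d" using rvec_carrier[of B] unfolding carrier_vec_def by simp

lemma nrm_entry: "i < d - 1 \<Longrightarrow> j < d - 1 \<Longrightarrow> nrm A $$ (i,j) = A $$ (i,j)"
  unfolding nrm_def by simp

lemma pm_nrm: "pm (d-1) (d-1) nrm"
  unfolding pm_def using nrm_entry by (auto simp del: One_nat_def)

lemma cpoly_adjnrm: "i < d - 1 \<Longrightarrow> j < d - 1 \<Longrightarrow> cpoly (d-1) (\<lambda>A. adj_mat (nrm A) $$ (i,j))"
  using pmD(2)[OF pm_adj[OF pm_nrm]] by blast

lemma cpoly_Emb:
  assumes "\<And>i j. i < d - 1 \<Longrightarrow> j < d - 1 \<Longrightarrow> cpoly (d-1) (\<lambda>A. M A $$ (i,j))"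
    and "l < d" "k < d"
  shows "cpoly (d-1) (\<lambda>A. Emb (M A) $$ (l,k))"
proof (cases "l = p \<or> k = p")
  case True
  then have "(\<lambda>A. Emb (M A) $$ (l,k)) = (\<lambda>A. if l = p \<and> k = p then 1 else 0)"
    unfolding Emb_def using assms(2,3) by auto
  then show ?thesis by (simp add: cpoly_const)
next
  case False
  then have "(\<lambda>A. Emb (M A) $$ (l,k)) = (\<lambda>A. M A $$ (delete_index p l, delete_index p k))"
    unfolding Emb_def using assms(2,3) by auto
  then show ?thesis using assms(1)[OF del_lt[OF assms(2)] del_lt[OF assms(3)]] False by simp
qed

lemma cpoly_rvec:
  assumes "k < d"
  shows "cpoly (d-1) (\<lambda>A. rvec (adj_mat (nrm A)) $ k)"
proof -
  have eq: "(\<lambda>A. rvec (adj_mat (nrm A)) $ k) = (\<lambda>A. \<Sum>l\<in>{0..<d}. Emb (adj_mat (nrm A)) $$ (l,k) * hatv d \<alpha> (e p) $ l)"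
    unfolding rvec_def using assms by (intro ext) (simp add: row_def scalar_prod_def)
  show ?thesis unfolding eq
    by (intro cpoly_sum cpoly_mult cpoly_const cpoly_Emb cpoly_adjnrm) (use assms in auto)
qed

lemma cpoly_vv:
  assumes "i < d"
  shows "cpoly (d-1) (\<lambda>A. vv (adj_mat (nrm A)) $ i)"
proof -
  have eq: "(\<lambda>A. vv (adj_mat (nrm A)) $ i) = (\<lambda>A. cnj (\<Sum>k\<in>{0..<d}. Ginv $$ (i,k) * rvec (adj_mat (nrm A)) $ k))"
    unfolding vv_def cvec_def using assms by (intro ext) (simp add: row_def scalar_prod_def)
  show ?thesis unfolding eq
    by (intro cpoly_cnj cpoly_sum cpoly_mult cpoly_const cpoly_rvec) auto
qed

lemma cpoly_ccoef: "cpoly (d-1) (\<lambda>A. ccoef (vv (adj_mat (nrm A))))"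
proof -
  have eq: "(\<lambda>A. ccoef (vv (adj_mat (nrm A)))) = (\<lambda>A. (\<beta> / (2 * (\<beta> * cnj \<beta>))) *
    (1 - (\<Sum>i<d. \<Sum>j<d. vv (adj_mat (nrm A)) $ i * cnj (vv (adj_mat (nrm A)) $ j) * Qgram \<alpha> i j)))"
    unfolding ccoef_def Qform_def by (intro ext) (simp add: field_simps)
  show ?thesis unfolding eq
    by (intro cpoly_cmult cpoly_diff cpoly_const cpoly_sum cpoly_mult cpoly_cnj cpoly_vv) auto
qed

lemma pm_sig: "pm (d-1) d sig"
  unfolding pm_def
proof (intro conjI allI impI)
  fix A show "sig A \<in> carrier_mat d d" by simp
next
  fix i j assume i: "i < d" and j: "j < d"
  have eq: "(\<lambda>A. sig A $$ (i,j)) = (\<lambda>A. Emb (nrm A) $$ (i,j) +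
      (vv (adj_mat (nrm A)) $ i - e p $ i + ccoef (vv (adj_mat (nrm A))) * w $ i) * e p $ j)"
    unfolding sig_def outer_def colv_def using i j hw by (intro ext) simp
  have "cpoly (d-1) (\<lambda>A. Emb (nrm A) $$ (i,j))"
    by (rule cpoly_Emb[OF _ i j]) (auto simp: nrm_entry intro!: cpoly_entry)
  then show "cpoly (d-1) (\<lambda>A. sig A $$ (i,j))" unfolding eq
    by (intro cpoly_add cpoly_mult cpoly_diff cpoly_const cpoly_vv cpoly_ccoef i) auto
qed

end


context mt begin

lemma hat_dot: "x \<in> carrier_vec d \<Longrightarrow> hatv d \<alpha> y \<bullet> x = Q x y"
  using Qform_hat[of x d \<alpha> y] comm_scalar_prod[OF hatv_carrier, of x d \<alpha> y] by simp

definition Mu :: "complex vec \<Rightarrow> complex \<Rightarrow> complex mat" where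
  "Mu u s = 1\<^sub>m d + outer (s \<cdot>\<^sub>v u - (s^2 * (Q u u / 2)) \<cdot>\<^sub>v w) (hatv d \<alpha> w) + outer w ((- s) \<cdot>\<^sub>v hatv d \<alpha> u)"

lemma Mu_carrier[simp]: "u \<in> carrier_vec d \<Longrightarrow> Mu u s \<in> carrier_mat d d"
  unfolding Mu_def using hw by simp

lemma Mu_vec:
  assumes u: "u \<in> carrier_vec d" and x: "x \<in> carrier_vec d"
  shows "Mu u s *\<^sub>v x = x + (s * Q x w) \<cdot>\<^sub>v u + (- s * Q x u - s^2 * (Q u u / 2) * Q x w) \<cdot>\<^sub>v w"
proof -
  have c1: "s \<cdot>\<^sub>v u - (s^2 * (Q u u / 2)) \<cdot>\<^sub>v w \<in> carrier_vec d" using u hw by simp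
  have "Mu u s *\<^sub>v x = x + outer (s \<cdot>\<^sub>v u - (s^2 * (Q u u / 2)) \<cdot>\<^sub>v w) (hatv d \<alpha> w) *\<^sub>v x
      + outer w ((- s) \<cdot>\<^sub>v hatv d \<alpha> u) *\<^sub>v x"
    unfolding Mu_def using u x hw
    by (simp add: add_mult_distrib_mat_vec[of _ d d])
  also have "outer (s \<cdot>\<^sub>v u - (s^2 * (Q u u / 2)) \<cdot>\<^sub>v w) (hatv d \<alpha> w) *\<^sub>v x
      = Q x w \<cdot>\<^sub>v (s \<cdot>\<^sub>v u - (s^2 * (Q u u / 2)) \<cdot>\<^sub>v w)"
    using outer_mult_vec[OF c1 hatv_carrier x] hat_dot[OF x] by simp
  also have "outer w ((- s) \<cdot>\<^sub>v hatv d \<alpha> u) *\<^sub>v x = (- s * Q x u) \<cdot>\<^sub>v w"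
    using outer_mult_vec[OF hw _ x, of "(- s) \<cdot>\<^sub>v hatv d \<alpha> u"] hat_dot[OF x, of u] x
    by (simp add: smult_scalar_prod_distrib[of _ d])
  finally show ?thesis using u x hw by (intro eq_vecI) (auto simp: algebra_simps)
qed

lemma Quw: "u \<in> carrier_vec d \<Longrightarrow> u $ p = 0 \<Longrightarrow> Q u w = 0" using Qxw by simp
lemma Qwu: "u \<in> carrier_vec d \<Longrightarrow> u $ p = 0 \<Longrightarrow> Q w u = 0" using Qwx by simp

lemma Mu_inv:
  assumes u: "u \<in> carrier_vec d" and up: "u $ p = 0"
  shows "Mu u s * Mu u (-s) = 1\<^sub>m d"
proof (rule mat_eq_vecI[of _ d])
  fix x :: "complex vec" assume x: "x \<in> carrier_vec d"
  define q where "q = Q u u"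
  define y where "y = Mu u (-s) *\<^sub>v x"
  have yc: "y \<in> carrier_vec d" unfolding y_def using mult_mat_vec_carrier[OF Mu_carrier[OF u] x] .
  have yeq: "y = x + (- s * Q x w) \<cdot>\<^sub>v u + (s * Q x u - s^2 * (q / 2) * Q x w) \<cdot>\<^sub>v w"
    unfolding y_def q_def Mu_vec[OF u x] by simp
  have Qyw: "Q y w = Q x w" unfolding yeq using x u hw Quw[OF u up] Qww
    by (simp add: Qform_add1 Qform_smult1)
  have Qyu: "Q y u = Q x u - s * q * Q x w" unfolding yeq q_def using x u hw Qwu[OF u up]
    by (simp add: Qform_add1 Qform_smult1)
  have "Mu u s * Mu u (-s) *\<^sub>v x = Mu u s *\<^sub>v y"
    unfolding y_def using assoc_mult_mat_vec[OF Mu_carrier[OF u] Mu_carrier[OF u] x] .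
  also have "\<dots> = y + (s * Q y w) \<cdot>\<^sub>v u + (- s * Q y u - s^2 * (q / 2) * Q y w) \<cdot>\<^sub>v w"
    unfolding Mu_vec[OF u yc] q_def ..
  also have "\<dots> = x" unfolding Qyw Qyu unfolding yeq using x u hw
    by (intro eq_vecI) (auto simp: algebra_simps power2_eq_square)
  finally show "Mu u s * Mu u (-s) *\<^sub>v x = 1\<^sub>m d *\<^sub>v x" using x by simp
qed (insert u, auto intro!: mult_carrier_mat[of _ d d _ d])

lemma Mu_zero: "u \<in> carrier_vec d \<Longrightarrow> Mu u 0 = 1\<^sub>m d"
  unfolding Mu_def using hw by (intro eq_matI) (auto simp: outer_def)

lemma Mu_entry:
  assumes u: "u \<in> carrier_vec d" and i: "i < d" and j: "j < d"
  shows "Mu u s $$ (i,j) = (if i = j then 1 else 0) + s * (u $ i * hatv d \<alpha> w $ j - w $ i * hatv d \<alpha> u $ j)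
     + s * s * (- (Q u u / 2) * w $ i * hatv d \<alpha> w $ j)"
  unfolding Mu_def outer_def using u hw i j by (simp add: algebra_simps power2_eq_square)

lemma Mu_det:
  assumes u: "u \<in> carrier_vec d" and up: "u $ p = 0"
  shows "det (Mu u 1) = 1"
proof (rule det_family_one[where M = "Mu u"])
  show "\<And>s. Mu u s \<in> carrier_mat d d" using u by simp
  show "\<And>s. Mu u s * Mu u (- s) = 1\<^sub>m d" using Mu_inv[OF u up] .
  show "Mu u 0 = 1\<^sub>m d" using Mu_zero[OF u] .
  fix i j assume i: "i < d" and j: "j < d"
  show "pfun (\<lambda>s. Mu u s $$ (i, j))" unfolding Mu_entry[OF u i j]
    by (intro pfun_add pfun_mult pfun_const pfun_id)
qed

lemma Mu_pres:
  assumes u: "u \<in> carrier_vec d" and up: "u $ p = 0"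
    and x: "x \<in> carrier_vec d" and y: "y \<in> carrier_vec d"
  shows "Q (Mu u 1 *\<^sub>v x) (Mu u 1 *\<^sub>v y) = Q x y"
proof -
  define q where "q = Q u u"
  have qr: "cnj q = q" unfolding q_def using Qform_herm[of d \<alpha> u u] by simp
  define a where "a = Q x w"
  define b where "b = Q x u"
  define a' where "a' = Q y w"
  define b' where "b' = Q y u"
  have uy: "Q u y = cnj b'" unfolding b'_def using Qform_herm by metis
  have wy: "Q w y = cnj a'" unfolding a'_def using Qform_herm by metis
  have "Q (Mu u 1 *\<^sub>v x) (Mu u 1 *\<^sub>v y) = Q (x + a \<cdot>\<^sub>v u + (- b - q / 2 * a) \<cdot>\<^sub>v w) (y + a' \<cdot>\<^sub>v u + (- b' - q / 2 * a') \<cdot>\<^sub>v w)"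
    unfolding Mu_vec[OF u x] Mu_vec[OF u y] a_def b_def a'_def b'_def q_def by simp
  also have "\<dots> = Q x y + cnj a' * b + cnj (- b' - q / 2 * a') * a + a * cnj b' + a * cnj a' * q
     + (- b - q / 2 * a) * cnj a'"
    using x y u hw Quw[OF u up] Qwu[OF u up] Qww uy wy qr
    by (simp add: Qform_add1 Qform_add2 Qform_smult1 Qform_smult2 algebra_simps a_def[symmetric] b_def[symmetric] q_def[symmetric])
  also have "\<dots> = Q x y" using qr by (simp add: algebra_simps)
  finally show ?thesis .
qed

lemma Mu_w: "u \<in> carrier_vec d \<Longrightarrow> u $ p = 0 \<Longrightarrow> Mu u 1 *\<^sub>v w = w"
  using Mu_vec[of u w 1] hw Qww Qwu[of u] by (auto intro!: eq_vecI)

lemma Mu_Tset: "u \<in> carrier_vec d \<Longrightarrow> u $ p = 0 \<Longrightarrow> Mu u 1 \<in> Tset"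
  by (intro TsetI Mu_carrier Mu_det Mu_w Mu_pres)

lemma Mu_comm_vec:
  assumes u: "u \<in> carrier_vec d" and up: "u $ p = 0" and v: "v \<in> carrier_vec d" and vp: "v $ p = 0"
    and x: "x \<in> carrier_vec d"
  shows "Mu u 1 *\<^sub>v (Mu v 1 *\<^sub>v x) = kt (2 * Im (Q u v)) *\<^sub>v (Mu v 1 *\<^sub>v (Mu u 1 *\<^sub>v x))"
proof -
  define qu where "qu = Q u u"
  define qv where "qv = Q v v"
  have vu: "Q v u = cnj (Q u v)" using Qform_herm by metis
  have MV: "Mu v 1 *\<^sub>v x = x + Q x w \<cdot>\<^sub>v v + (- Q x v - qv / 2 * Q x w) \<cdot>\<^sub>v w"
    unfolding Mu_vec[OF v x] qv_def by simp
  have MU: "Mu u 1 *\<^sub>v x = x + Q x w \<cdot>\<^sub>v u + (- Q x u - qu / 2 * Q x w) \<cdot>\<^sub>v w"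
    unfolding Mu_vec[OF u x] qu_def by simp
  have c1: "Mu v 1 *\<^sub>v x \<in> carrier_vec d" "Mu u 1 *\<^sub>v x \<in> carrier_vec d"
    using mult_mat_vec_carrier[OF Mu_carrier[OF v] x] mult_mat_vec_carrier[OF Mu_carrier[OF u] x] by auto
  have l: "Mu u 1 *\<^sub>v (Mu v 1 *\<^sub>v x) = x + Q x w \<cdot>\<^sub>v v + Q x w \<cdot>\<^sub>v u
     + (- Q x v - qv / 2 * Q x w - Q x u - Q x w * Q v u - qu / 2 * Q x w) \<cdot>\<^sub>v w"
  proof -
    have "Mu u 1 *\<^sub>v (Mu v 1 *\<^sub>v x) = Mu v 1 *\<^sub>v x + Q (Mu v 1 *\<^sub>v x) w \<cdot>\<^sub>v u
        + (- Q (Mu v 1 *\<^sub>v x) u - qu / 2 * Q (Mu v 1 *\<^sub>v x) w) \<cdot>\<^sub>v w"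
      unfolding Mu_vec[OF u c1(1)] qu_def by simp
    also have "Q (Mu v 1 *\<^sub>v x) w = Q x w" unfolding MV using x v hw Quw[OF v vp] Qww
      by (simp add: Qform_add1 Qform_smult1)
    also have "Q (Mu v 1 *\<^sub>v x) u = Q x u + Q x w * Q v u" unfolding MV using x v u hw Qwu[OF u up]
      by (simp add: Qform_add1 Qform_smult1)
    finally show ?thesis unfolding MV using x u v hw by (intro eq_vecI) (auto simp: algebra_simps)
  qed
  have r: "Mu v 1 *\<^sub>v (Mu u 1 *\<^sub>v x) = x + Q x w \<cdot>\<^sub>v u + Q x w \<cdot>\<^sub>v v
     + (- Q x u - qu / 2 * Q x w - Q x v - Q x w * Q u v - qv / 2 * Q x w) \<cdot>\<^sub>v w"
  proof -
    have "Mu v 1 *\<^sub>v (Mu u 1 *\<^sub>v x) = Mu u 1 *\<^sub>v x + Q (Mu u 1 *\<^sub>v x) w \<cdot>\<^sub>v v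
        + (- Q (Mu u 1 *\<^sub>v x) v - qv / 2 * Q (Mu u 1 *\<^sub>v x) w) \<cdot>\<^sub>v w"
      unfolding Mu_vec[OF v c1(2)] qv_def by simp
    also have "Q (Mu u 1 *\<^sub>v x) w = Q x w" unfolding MU using x u hw Quw[OF u up] Qww
      by (simp add: Qform_add1 Qform_smult1)
    also have "Q (Mu u 1 *\<^sub>v x) v = Q x v + Q x w * Q u v" unfolding MU using x v u hw Qwu[OF v vp]
      by (simp add: Qform_add1 Qform_smult1)
    finally show ?thesis unfolding MU using x u v hw by (intro eq_vecI) (auto simp: algebra_simps)
  qed
  have rc: "Mu v 1 *\<^sub>v (Mu u 1 *\<^sub>v x) \<in> carrier_vec d" using mult_mat_vec_carrier[OF Mu_carrier[OF v] c1(2)] .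
  have Qrw: "Q (Mu v 1 *\<^sub>v (Mu u 1 *\<^sub>v x)) w = Q x w"
    unfolding r using x u v hw Quw[OF u up] Quw[OF v vp] Qww by (simp add: Qform_add1 Qform_smult1)
  have im: "\<i> * of_real (2 * Im (Q u v)) = Q u v - cnj (Q u v)"
    by (simp add: complex_eq_iff)
  show ?thesis unfolding kt_vec[OF rc] Qrw unfolding l r im vu
    using x u v hw by (intro eq_vecI) (auto simp: algebra_simps)
qed

definition Cm :: "complex mat \<Rightarrow> complex mat \<Rightarrow> complex mat" where
  "Cm a b = a * b * adj_mat a * adj_mat b"

lemma Cm_vec:
  assumes "a \<in> Tset" "b \<in> Tset" "x \<in> carrier_vec d"
  shows "Cm a b *\<^sub>v x = a *\<^sub>v (b *\<^sub>v (adj_mat a *\<^sub>v (adj_mat b *\<^sub>v x)))"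
proof -
  note A = TsetD(1)[OF assms(1)] and B = TsetD(1)[OF assms(2)]
  note A' = TsetD(1)[OF Tset_adj(1)[OF assms(1)]] and B' = TsetD(1)[OF Tset_adj(1)[OF assms(2)]]
  have ab: "a * b \<in> carrier_mat d d" using A B by simp
  have aba: "a * b * adj_mat a \<in> carrier_mat d d" using ab A' by simp
  show ?thesis unfolding Cm_def
    using assoc_mult_mat_vec[OF aba B' assms(3)] assoc_mult_mat_vec[OF ab A'] assoc_mult_mat_vec[OF A B]
      B' A' assms(3) by simp
qed

lemma Cm_Tset: "a \<in> Tset \<Longrightarrow> b \<in> Tset \<Longrightarrow> Cm a b \<in> Tset"
  unfolding Cm_def by (intro Tset_mult Tset_adj) auto

lemma adj_vec:
  assumes "a \<in> Tset" "x \<in> carrier_vec d"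
  shows "a *\<^sub>v (adj_mat a *\<^sub>v x) = x" "adj_mat a *\<^sub>v (a *\<^sub>v x) = x"
  using assoc_mult_mat_vec[OF TsetD(1)[OF assms(1)] TsetD(1)[OF Tset_adj(1)[OF assms(1)]] assms(2)]
    assoc_mult_mat_vec[OF TsetD(1)[OF Tset_adj(1)[OF assms(1)]] TsetD(1)[OF assms(1)] assms(2)]
    Tset_adj[OF assms(1)] assms(2) by auto

lemma Cm_kt:
  assumes a: "a \<in> Tset" and b: "b \<in> Tset"
    and comm: "\<And>x. x \<in> carrier_vec d \<Longrightarrow> a *\<^sub>v (b *\<^sub>v x) = kt t *\<^sub>v (b *\<^sub>v (a *\<^sub>v x))"
  shows "Cm a b = kt t"
proof (rule mat_eq_vecI[of _ d])
  show "Cm a b \<in> carrier_mat d d" using TsetD(1)[OF Cm_Tset[OF a b]] .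
  fix x :: "complex vec" assume x: "x \<in> carrier_vec d"
  have A': "adj_mat a \<in> carrier_mat d d" and B': "adj_mat b \<in> carrier_mat d d"
    using TsetD(1)[OF Tset_adj(1)[OF a]] TsetD(1)[OF Tset_adj(1)[OF b]] by auto
  have "Cm a b *\<^sub>v x = a *\<^sub>v (b *\<^sub>v (adj_mat a *\<^sub>v (adj_mat b *\<^sub>v x)))" using Cm_vec[OF a b x] .
  also have "\<dots> = kt t *\<^sub>v (b *\<^sub>v (a *\<^sub>v (adj_mat a *\<^sub>v (adj_mat b *\<^sub>v x))))" using comm A' B' x by simp
  also have "\<dots> = kt t *\<^sub>v x" using adj_vec[OF a] adj_vec[OF b] B' x by simp
  finally show "Cm a b *\<^sub>v x = kt t *\<^sub>v x" .
qed simp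

lemma kt_vec_add: "x \<in> carrier_vec d \<Longrightarrow> kt s *\<^sub>v (kt t *\<^sub>v x) = kt (s + t) *\<^sub>v x"
  using assoc_mult_mat_vec[OF kt_carrier kt_carrier, of x s t] kt_add by simp

lemma kt_cancel: "v \<in> carrier_vec d \<Longrightarrow> kt s *\<^sub>v (kt (-s) *\<^sub>v v) = v"
  using kt_vec_add[of v s "-s"] by (simp add: kt_zero)

lemma adj_kt:
  assumes a: "a \<in> Tset"
  shows "adj_mat (a * kt s) = kt (-s) * adj_mat a"
proof -
  have a': "a * kt s \<in> Tset" using Tset_mult[OF a kt_Tset] .
  note A = TsetD(1)[OF a] and A' = TsetD(1)[OF Tset_adj(1)[OF a]]
  define X where "X = kt (-s) * adj_mat a"
  have Xc: "X \<in> carrier_mat d d" unfolding X_def using mult_carrier_mat[OF kt_carrier A'] .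
  have "(a * kt s) * X = 1\<^sub>m d"
  proof (rule mat_eq_vecI[of _ d])
    show "a * kt s * X \<in> carrier_mat d d" using mult_carrier_mat[OF mult_carrier_mat[OF A kt_carrier] Xc] .
    fix x :: "complex vec" assume x: "x \<in> carrier_vec d"
    have c1: "adj_mat a *\<^sub>v x \<in> carrier_vec d" using mult_mat_vec_carrier[OF A' x] .
    have c2: "kt (-s) *\<^sub>v (adj_mat a *\<^sub>v x) \<in> carrier_vec d" using mult_mat_vec_carrier[OF kt_carrier c1] .
    have "a * kt s * X *\<^sub>v x = (a * kt s) *\<^sub>v (X *\<^sub>v x)"
      using assoc_mult_mat_vec[OF mult_carrier_mat[OF A kt_carrier] Xc x] .
    also have "X *\<^sub>v x = kt (-s) *\<^sub>v (adj_mat a *\<^sub>v x)" unfolding X_def using assoc_mult_mat_vec[OF kt_carrier A' x] .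
    also have "(a * kt s) *\<^sub>v (kt (-s) *\<^sub>v (adj_mat a *\<^sub>v x)) = a *\<^sub>v (kt s *\<^sub>v (kt (-s) *\<^sub>v (adj_mat a *\<^sub>v x)))"
      using assoc_mult_mat_vec[OF A kt_carrier c2] .
    finally have "a * kt s * X *\<^sub>v x = a *\<^sub>v (kt s *\<^sub>v (kt (-s) *\<^sub>v (adj_mat a *\<^sub>v x)))" .
    also have "\<dots> = x" using kt_vec_add A' x adj_vec[OF a x] by (simp add: kt_zero)
    finally show "a * kt s * X *\<^sub>v x = 1\<^sub>m d *\<^sub>v x" using x by simp
  qed simp
  note aX = this
  have aa: "adj_mat (a * kt s) * (a * kt s) = 1\<^sub>m d" using Tset_adj(3)[OF a'] .
  have adjc: "adj_mat (a * kt s) \<in> carrier_mat d d" using TsetD(1)[OF Tset_adj(1)[OF a']] .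
  have a'c: "a * kt s \<in> carrier_mat d d" using TsetD(1)[OF a'] .
  have "adj_mat (a * kt s) = adj_mat (a * kt s) * 1\<^sub>m d" using right_mult_one_mat[OF adjc] by simp
  also have "\<dots> = adj_mat (a * kt s) * ((a * kt s) * X)" using aX by simp
  also have "\<dots> = (adj_mat (a * kt s) * (a * kt s)) * X" using assoc_mult_mat[OF adjc a'c Xc] by simp
  also have "\<dots> = X" using aa left_mult_one_mat[OF Xc] by simp
  finally show ?thesis unfolding X_def .
qed

lemma Cm_shift:
  assumes a: "a \<in> Tset" and b: "b \<in> Tset"
  shows "Cm (a * kt s) (b * kt t) = Cm a b"
proof (rule mat_eq_vecI[of _ d])
  have a': "a * kt s \<in> Tset" and b': "b * kt t \<in> Tset" using Tset_mult kt_Tset a b by auto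
  show "Cm (a * kt s) (b * kt t) \<in> carrier_mat d d" using TsetD(1)[OF Cm_Tset[OF a' b']] .
  show "Cm a b \<in> carrier_mat d d" using TsetD(1)[OF Cm_Tset[OF a b]] .
  fix x :: "complex vec" assume x: "x \<in> carrier_vec d"
  note A = TsetD(1)[OF a] and B = TsetD(1)[OF b]
  note Aa = Tset_adj(1)[OF a] and Ba = Tset_adj(1)[OF b]
  note A' = TsetD(1)[OF Aa] and B' = TsetD(1)[OF Ba]
  define y where "y = adj_mat b *\<^sub>v x"
  define z where "z = adj_mat a *\<^sub>v y"
  have yc: "y \<in> carrier_vec d" and zc: "z \<in> carrier_vec d" unfolding y_def z_def using A' B' x by auto
  have "Cm (a * kt s) (b * kt t) *\<^sub>v x =
      (a * kt s) *\<^sub>v ((b * kt t) *\<^sub>v (adj_mat (a * kt s) *\<^sub>v (adj_mat (b * kt t) *\<^sub>v x)))"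
    using Cm_vec[OF a' b' x] .
  also have "adj_mat (b * kt t) *\<^sub>v x = kt (-t) *\<^sub>v y" unfolding adj_kt[OF b] y_def
    using assoc_mult_mat_vec[OF kt_carrier B' x] .
  also have "adj_mat (a * kt s) *\<^sub>v (kt (-t) *\<^sub>v y) = kt (-t) *\<^sub>v (kt (-s) *\<^sub>v z)"
  proof -
    have kyc: "kt (-t) *\<^sub>v y \<in> carrier_vec d" using mult_mat_vec_carrier[OF kt_carrier yc] .
    have "adj_mat (a * kt s) *\<^sub>v (kt (-t) *\<^sub>v y) = kt (-s) *\<^sub>v (adj_mat a *\<^sub>v (kt (-t) *\<^sub>v y))"
      unfolding adj_kt[OF a] using assoc_mult_mat_vec[OF kt_carrier A' kyc] .
    also have "adj_mat a *\<^sub>v (kt (-t) *\<^sub>v y) = kt (-t) *\<^sub>v z"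
      unfolding z_def using kt_central_vec[OF Aa yc] .
    also have "kt (-s) *\<^sub>v (kt (-t) *\<^sub>v z) = kt (-t) *\<^sub>v (kt (-s) *\<^sub>v z)"
      using kt_vec_add[OF zc] by (simp add: add.commute)
    finally show ?thesis .
  qed
  also have "(b * kt t) *\<^sub>v (kt (-t) *\<^sub>v (kt (-s) *\<^sub>v z)) = kt (-s) *\<^sub>v (b *\<^sub>v z)"
  proof -
    have c: "kt (-s) *\<^sub>v z \<in> carrier_vec d" using mult_mat_vec_carrier[OF kt_carrier zc] .
    have c2: "kt (-t) *\<^sub>v (kt (-s) *\<^sub>v z) \<in> carrier_vec d" using mult_mat_vec_carrier[OF kt_carrier c] .
    have "(b * kt t) *\<^sub>v (kt (-t) *\<^sub>v (kt (-s) *\<^sub>v z)) = b *\<^sub>v (kt t *\<^sub>v (kt (-t) *\<^sub>v (kt (-s) *\<^sub>v z)))"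
      using assoc_mult_mat_vec[OF B kt_carrier c2] .
    also have "kt t *\<^sub>v (kt (-t) *\<^sub>v (kt (-s) *\<^sub>v z)) = kt (-s) *\<^sub>v z" using kt_cancel[OF c] .
    also have "b *\<^sub>v (kt (-s) *\<^sub>v z) = kt (-s) *\<^sub>v (b *\<^sub>v z)" using kt_central_vec[OF b zc] .
    finally show ?thesis .
  qed
  also have "(a * kt s) *\<^sub>v (kt (-s) *\<^sub>v (b *\<^sub>v z)) = a *\<^sub>v (b *\<^sub>v z)"
  proof -
    have c: "b *\<^sub>v z \<in> carrier_vec d" using mult_mat_vec_carrier[OF B zc] .
    have c2: "kt (-s) *\<^sub>v (b *\<^sub>v z) \<in> carrier_vec d" using mult_mat_vec_carrier[OF kt_carrier c] .
    show ?thesis using assoc_mult_mat_vec[OF A kt_carrier c2] kt_cancel[OF c] by simp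
  qed
  also have "\<dots> = Cm a b *\<^sub>v x" using Cm_vec[OF a b x] unfolding z_def y_def ..
  finally show "Cm (a * kt s) (b * kt t) *\<^sub>v x = Cm a b *\<^sub>v x" .
qed

end


context mt begin

lemma same_md:
  assumes G: "G \<in> carrier_mat d d" and G': "G' \<in> carrier_mat d d"
    and r: "rowunit G" and r': "rowunit G'" and md: "mat_delete G p p = mat_delete G' p p"
  shows "\<And>i j. i < d \<Longrightarrow> j < d \<Longrightarrow> j \<noteq> p \<Longrightarrow> G' $$ (i,j) = G $$ (i,j)"
proof -
  fix i j assume i: "i < d" and j: "j < d" and jp: "j \<noteq> p"
  show "G' $$ (i,j) = G $$ (i,j)"
  proof (cases "i = p")
    case True then show ?thesis using r r' j jp unfolding rowunit_def by simp
  next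
    case False
    have di: "delete_index p i < d - 1" and dj: "delete_index p j < d - 1" using del_lt i j False jp by auto
    have "G $$ (i,j) = mat_delete G p p $$ (delete_index p i, delete_index p j)"
      using md_index[OF G di dj] insert_delete_index[OF False] insert_delete_index[OF jp] by simp
    also have "\<dots> = mat_delete G' p p $$ (delete_index p i, delete_index p j)" using md by simp
    also have "\<dots> = G' $$ (i,j)"
      using md_index[OF G' di dj] insert_delete_index[OF False] insert_delete_index[OF jp] by simp
    finally show ?thesis by simp
  qed
qed

lemma Tset_sig_shift:
  assumes g: "g \<in> Tset"
  shows "\<exists>t. g = sig (mat_delete g p p) * kt t"
proof -
  define h where "h = mat_delete g p p"
  have hS: "h \<in> SU_star (d-1) \<alpha>" unfolding h_def using Tset_restr[OF g] .
  note SP = sig_props[OF hS]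
  show ?thesis unfolding h_def[symmetric]
  proof (rule Tset_same_restr[OF SP(1) g])
    show "\<And>i j. i < d \<Longrightarrow> j < d \<Longrightarrow> j \<noteq> p \<Longrightarrow> g $$ (i, j) = sig h $$ (i, j)"
      using same_md[OF TsetD(1)[OF SP(1)] TsetD(1)[OF g] SP(3) Tset_rowunit[OF g]] SP(2) unfolding h_def by simp
  qed
qed

lemma main_dense:
  assumes IHz: "zariski_dense_in (d-1) (Gam' \<inter> SL_mat (d-1)) (SU_star (d-1) \<alpha>)"
  shows "zariski_dense_in d S Tset"
  unfolding zariski_dense_in_def
proof (intro conjI ballI impI)
  show "S \<subseteq> Tset" using S_Tset by blast
  have sub: "Gam' \<inter> SL_mat (d-1) \<subseteq> SU_star (d-1) \<alpha>" using IHz unfolding zariski_dense_in_def by auto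
  have IH: "F B = 0" if "F \<in> real_poly_fun (d-1)" "\<And>B. B \<in> Gam' \<inter> SL_mat (d-1) \<Longrightarrow> F B = 0"
    "B \<in> SU_star (d-1) \<alpha>" for F B
    using IHz that unfolding zariski_dense_in_def by blast
  fix f g assume f: "f \<in> real_poly_fun d" and van: "\<forall>A\<in>S. f A = 0" and g: "g \<in> Tset"
  have liftsig: "\<exists>G \<in> S. \<exists>t. sig g' = G * kt t" if g': "g' \<in> Gam' \<inter> SL_mat (d-1)" for g'
  proof -
    obtain G where G: "G \<in> S" "mat_delete G p p = g'" using lift_S[OF g'] by blast
    have GT: "G \<in> Tset" using S_Tset[OF G(1)] .
    obtain t where "G = sig (mat_delete G p p) * kt t" using Tset_sig_shift[OF GT] by blast
    then have "G * kt (-t) = sig g' * kt t * kt (-t)" using G(2) by simp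
    also have "\<dots> = sig g' * (kt t * kt (-t))" using assoc_mult_mat[OF sig_carrier kt_carrier kt_carrier] .
    also have "\<dots> = sig g'" using kt_add[of t "-t"] kt_zero by simp
    finally show ?thesis using G(1) by metis
  qed
  have pmC: "pm (d-1) d (\<lambda>B. \<gamma> * Cm (M1 B) (M2 B))" if "\<gamma> \<in> carrier_mat d d" "pm (d-1) d M1" "pm (d-1) d M2" for \<gamma> M1 M2
    unfolding Cm_def using that by (intro pm_mult pm_const pm_adj) auto
  have step1: "f (\<gamma> * Cm (sig g1) (sig g2)) = 0"
    if \<gamma>: "\<gamma> \<in> S" and g1: "g1 \<in> Gam' \<inter> SL_mat (d-1)" and g2: "g2 \<in> Gam' \<inter> SL_mat (d-1)" for \<gamma> g1 g2
  proof -
    obtain G1 t1 where G1: "G1 \<in> S" "sig g1 = G1 * kt t1" using liftsig[OF g1] by blast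
    obtain G2 t2 where G2: "G2 \<in> S" "sig g2 = G2 * kt t2" using liftsig[OF g2] by blast
    have "Cm (sig g1) (sig g2) = Cm G1 G2" unfolding G1(2) G2(2) using Cm_shift S_Tset G1 G2 by blast
    moreover have "Cm G1 G2 \<in> S" unfolding Cm_def using G1(1) G2(1) by (intro S_mult S_adj)
    ultimately have "\<gamma> * Cm (sig g1) (sig g2) \<in> S" using S_mult \<gamma> by simp
    then show ?thesis using van by blast
  qed
  have step2: "f (\<gamma> * Cm (sig h1) (sig g2)) = 0"
    if \<gamma>: "\<gamma> \<in> S" and h1: "h1 \<in> SU_star (d-1) \<alpha>" and g2: "g2 \<in> Gam' \<inter> SL_mat (d-1)" for \<gamma> h1 g2
  proof -
    have \<gamma>c: "\<gamma> \<in> carrier_mat d d" using TsetD(1)[OF S_Tset[OF \<gamma>]] .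
    have r: "(\<lambda>B. f (\<gamma> * Cm (sig B) (sig g2))) \<in> real_poly_fun (d-1)"
      by (rule rp_pm[OF f pmC[OF \<gamma>c pm_sig pm_const]]) simp
    have v: "\<And>B. B \<in> Gam' \<inter> SL_mat (d-1) \<Longrightarrow> f (\<gamma> * Cm (sig B) (sig g2)) = 0"
      using step1[OF \<gamma> _ g2] by blast
    show ?thesis using IH[OF r v h1] by simp
  qed
  have step3: "f (\<gamma> * Cm (sig h1) (sig h2)) = 0"
    if \<gamma>: "\<gamma> \<in> S" and h1: "h1 \<in> SU_star (d-1) \<alpha>" and h2: "h2 \<in> SU_star (d-1) \<alpha>" for \<gamma> h1 h2
  proof -
    have \<gamma>c: "\<gamma> \<in> carrier_mat d d" using TsetD(1)[OF S_Tset[OF \<gamma>]] .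
    have r: "(\<lambda>B. f (\<gamma> * Cm (sig h1) (sig B))) \<in> real_poly_fun (d-1)"
      by (rule rp_pm[OF f pmC[OF \<gamma>c pm_const pm_sig]]) simp
    have v: "\<And>B. B \<in> Gam' \<inter> SL_mat (d-1) \<Longrightarrow> f (\<gamma> * Cm (sig h1) (sig B)) = 0"
      using step2[OF \<gamma> h1] by blast
    show ?thesis using IH[OF r v h2] by simp
  qed
  have step4: "f (\<gamma> * kt t) = 0" if \<gamma>: "\<gamma> \<in> S" for \<gamma> t
  proof -
    define a where "a = (if p = 0 then 1 else 0 :: nat)"
    have a: "a < d" "a \<noteq> p" unfolding a_def using hd by auto
    define u where "u = (e a :: complex vec)"
    define v where "v = (\<i> * of_real (- t / 2)) \<cdot>\<^sub>v e a"
    have uc: "u \<in> carrier_vec d" and vc: "v \<in> carrier_vec d" unfolding u_def v_def by auto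
    have up: "u $ p = 0" and vp: "v $ p = 0" unfolding u_def v_def using a hp by auto
    have Qaa: "Q (e a) (e a) = 1" using Qee_gen[OF a(1)] .
    have Quv: "Q u v = cnj (\<i> * of_real (- t / 2))" unfolding u_def v_def using Qaa by (simp add: Qform_smult2)
    have tt: "2 * Im (Q u v) = t" unfolding Quv by simp
    have MuT: "Mu u 1 \<in> Tset" "Mu v 1 \<in> Tset" using Mu_Tset uc vc up vp by auto
    have Cmk: "Cm (Mu u 1) (Mu v 1) = kt t"
      using Cm_kt[OF MuT] Mu_comm_vec[OF uc up vc vp] unfolding tt by blast
    obtain s1 where s1: "Mu u 1 = sig (mat_delete (Mu u 1) p p) * kt s1" using Tset_sig_shift[OF MuT(1)] by blast
    obtain s2 where s2: "Mu v 1 = sig (mat_delete (Mu v 1) p p) * kt s2" using Tset_sig_shift[OF MuT(2)] by blast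
    have h1: "mat_delete (Mu u 1) p p \<in> SU_star (d-1) \<alpha>" using Tset_restr[OF MuT(1)] .
    have h2: "mat_delete (Mu v 1) p p \<in> SU_star (d-1) \<alpha>" using Tset_restr[OF MuT(2)] .
    have "kt t = Cm (sig (mat_delete (Mu u 1) p p)) (sig (mat_delete (Mu v 1) p p))"
      using Cmk s1 s2 Cm_shift[OF sig_props(1)[OF h1] sig_props(1)[OF h2]] by metis
    then show ?thesis using step3[OF \<gamma> h1 h2] by simp
  qed
  have g_shift: "\<exists>t. g = sig (mat_delete g p p) * kt t" using Tset_sig_shift[OF g] .
  then obtain t0 where t0: "g = sig (mat_delete g p p) * kt t0" by blast
  have van5: "f (sig g' * kt t0) = 0" if g': "g' \<in> Gam' \<inter> SL_mat (d-1)" for g'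
  proof -
    obtain G s where G: "G \<in> S" "sig g' = G * kt s" using liftsig[OF g'] by blast
    have Gc: "G \<in> carrier_mat d d" using TsetD(1)[OF S_Tset[OF G(1)]] .
    have "sig g' * kt t0 = G * (kt s * kt t0)" unfolding G(2) using assoc_mult_mat[OF Gc kt_carrier kt_carrier] .
    also have "\<dots> = G * kt (s + t0)" using kt_add by simp
    finally show ?thesis using step4[OF G(1)] by simp
  qed
  have r: "(\<lambda>B. f (sig B * kt t0)) \<in> real_poly_fun (d-1)"
    by (rule rp_pm[OF f pm_mult[OF pm_sig pm_const]]) simp
  have "f (sig (mat_delete g p p) * kt t0) = 0" using IH[OF r van5 Tset_restr[OF g]] by simp
  then show "f g = 0" using t0 by simp
qed

end

theorem mainTheorem11:
  fixes d :: nat and \<alpha> :: real and p :: nat and w :: "complex vec"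
  assumes hd: "d \<ge> 5"
    and h\<alpha>: "0 < \<alpha>" "\<alpha> < 1/2"
    and hint: "real d * \<alpha> \<in> \<int>"
    and IH: "usual_dense_in (d - 1) (gen_group (d - 1) (Lop (d - 1) \<alpha> ` {..<d - 1}) \<inter> SL_mat (d - 1))
                (SU_star (d - 1) \<alpha>)
           \<or> zariski_dense_in (d - 1) (gen_group (d - 1) (Lop (d - 1) \<alpha> ` {..<d - 1}) \<inter> SL_mat (d - 1))
                (SU_star (d - 1) \<alpha>)"
    and hp: "p < d"
    and hw: "w \<in> carrier_vec d" "w \<noteq> 0\<^sub>v d"
    and hwspan: "{y \<in> carrier_vec d. \<forall>h \<in> carrier_vec d. h $ p = 0 \<longrightarrow> Qform d \<alpha> y h = 0}
                 = {c \<cdot>\<^sub>v w | c. True}"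
  shows "zariski_dense_in d (gen_group d (Lop d \<alpha> ` ({..<d} - {p})) \<inter> SU_Q d \<alpha>)
           {g \<in> SU_Q d \<alpha>. g *\<^sub>v w = w}"
proof -
  interpret mt d \<alpha> p w
    using hd h\<alpha> hint hp hw hwspan by unfold_locales auto
  have IHz: "zariski_dense_in (d - 1) (gen_group (d - 1) (Lop (d - 1) \<alpha> ` {..<d - 1}) \<inter> SL_mat (d - 1))
                (SU_star (d - 1) \<alpha>)"
    using IH usual_imp_zariski by blast
  show ?thesis using main_dense[OF IHz] unfolding Tset_def .
qed


end
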